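(* Let $X$ be a $d$-uniform simplicial complex such that the down-up walk $U_{d-1}D_d$ has second largest eigenvalue $\lambda_2(U_{d-1}D_d)\le1-\frac{1}{Cd}$ for some $C>0$. Then for every $0\le k\le d$ and every $f:X(k)\to\mathbb{R}$, with $Z=f(X)$, \[\mathrm{Var}(f)\le(C+1)\sum_{i=1}^k\mathbb{E}\left[(Z-Z'_{(i)})_+^2\right].\]
   Context: $X$ is a $d$-uniform simplicial complex ($X(j)$ its faces of size $j$) with a distribution $\pi_d$ on $X(d)$ inducing $\pi_j$ on $X(j)$ by uniform subsampling; variance and expectations are with respect to $\pi_k$. The down-up walk $U_{d-1}D_d$ on $X(d)$ deletes a uniform vertex and adds back a face containing the remainder proportionally to $\pi_d$. Order vertices of each face arbitrarily; for $x=(x_1,\dots,x_k)\sim\pi_k$, $Z=f(x)$ and $Z'_{(i)}=f(x_1,\dots,z_i,\dots,x_k)$ where $z_i$ is drawn from the vertex distribution of the link of $x\setminus\{x_i\}$ (the link of $s$ is $\{t\setminus s:s\subseteq t\in X\}$ with the induced distribution); $(z)_+=\max\{z,0\}$. *)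

theory Defs
  imports "HOL-Analysis.Analysis" "Jordan_Normal_Form.Char_Poly" "HOL-Library.Multiset"
begin

text \<open>A d-uniform (pure) simplicial complex is given by its set of top faces Xd
  (all of size d) with a distribution p on Xd (positive weights summing to 1).
  X(j) consists of all j-subsets of top faces.\<close>

definition faces :: "'v set set \<Rightarrow> nat \<Rightarrow> 'v set set" where
  "faces Xd j = {t. \<exists>s\<in>Xd. t \<subseteq> s \<and> card t = j}"

text \<open>Induced distribution pi_j on X(j): draw s from pi_d, then a uniform j-subset of s.\<close>
definition pi_face :: "'v set set \<Rightarrow> ('v set \<Rightarrow> real) \<Rightarrow> nat \<Rightarrow> nat \<Rightarrow> 'v set \<Rightarrow> real" where
  "pi_face Xd p d j t = (\<Sum>s\<in>Xd. if t \<subseteq> s then p s else 0) / real (d choose j)"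

definition expec :: "'v set set \<Rightarrow> ('v set \<Rightarrow> real) \<Rightarrow> nat \<Rightarrow> nat \<Rightarrow> ('v set \<Rightarrow> real) \<Rightarrow> real" where
  "expec Xd p d k g = (\<Sum>x\<in>faces Xd k. pi_face Xd p d k x * g x)"

definition var :: "'v set set \<Rightarrow> ('v set \<Rightarrow> real) \<Rightarrow> nat \<Rightarrow> nat \<Rightarrow> ('v set \<Rightarrow> real) \<Rightarrow> real" where
  "var Xd p d k g = expec Xd p d k (\<lambda>x. (g x - expec Xd p d k g)\<^sup>2)"

text \<open>Vertex distribution of the link of a face s: the link has top faces t - s
  (t in Xd, s \<subseteq> t) with probability proportional to p t; a vertex is obtained
  by uniform subsampling of one vertex of the link's top face (which has d - |s| vertices).\<close>
definition link_vertex_dist :: "'v set set \<Rightarrow> ('v set \<Rightarrow> real) \<Rightarrow> nat \<Rightarrow> 'v set \<Rightarrow> 'v \<Rightarrow> real" where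
  "link_vertex_dist Xd p d s z =
     (if z \<in> s then 0 else
       (\<Sum>t\<in>Xd. if insert z s \<subseteq> t then p t else 0)
         / ((\<Sum>t\<in>Xd. if s \<subseteq> t then p t else 0) * real (d - card s)))"

text \<open>Transition probabilities of the down-up walk U_{d-1} D_d on X(d):
  delete a uniform vertex v of s, then move to a top face s' containing s - {v}
  with probability proportional to p s'.\<close>
definition down_up :: "'v set set \<Rightarrow> ('v set \<Rightarrow> real) \<Rightarrow> nat \<Rightarrow> 'v set \<Rightarrow> 'v set \<Rightarrow> real" where
  "down_up Xd p d s s' =
     (\<Sum>v\<in>s. (if s - {v} \<subseteq> s'
        then p s' / (\<Sum>s''\<in>Xd. if s - {v} \<subseteq> s'' then p s'' else 0) else 0)) / real d"

text \<open>Transition matrix with respect to a fixed enumeration of X(d)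
  (eigenvalues do not depend on the enumeration).\<close>
definition enum_faces :: "'v set set \<Rightarrow> 'v set list" where
  "enum_faces Xd = (SOME l. distinct l \<and> set l = Xd)"

definition down_up_mat :: "'v set set \<Rightarrow> ('v set \<Rightarrow> real) \<Rightarrow> nat \<Rightarrow> real mat" where
  "down_up_mat Xd p d = (let l = enum_faces Xd in
     mat (length l) (length l) (\<lambda>(i, j). down_up Xd p d (l ! i) (l ! j)))"

definition eigs_desc :: "real mat \<Rightarrow> real list" where
  "eigs_desc A = rev (sorted_list_of_multiset (proots (char_poly A)))"

definition lambda2_le :: "real mat \<Rightarrow> real \<Rightarrow> bool" where
  "lambda2_le A b \<longleftrightarrow> (\<forall>\<mu>\<in>set (tl (eigs_desc A)). \<mu> \<le> b)"

end

theory Submission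
  imports Defs
begin
lemma sum_insert_index:
  assumes "i < n"
  shows "(\<Sum>j\<in>{0..<n-1}. F (insert_index i j)) = (\<Sum>k\<in>{0..<n}-{i}. (F k :: real))"
proof -
  have im: "{0..<n} - {i} = insert_index i ` {0..<n - 1}"
  proof
    show "{0..<n} - {i} \<subseteq> insert_index i ` {0..<n - 1}"
    proof
      fix k assume k: "k \<in> {0..<n} - {i}"
      hence "k = insert_index i (delete_index i k)" using insert_delete_index by auto
      moreover have "delete_index i k \<in> {0..<n-1}" using k assms by (auto simp: delete_index_def)
      ultimately show "k \<in> insert_index i ` {0..<n - 1}" by blast
    qed
    show "insert_index i ` {0..<n - 1} \<subseteq> {0..<n} - {i}"
      using assms by (auto simp: insert_index_def)
  qed
  show ?thesis unfolding im
    by (subst sum.reindex[OF insert_index_inj_on]) simp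
qed

lemma mult_mat_vec_nth:
  assumes "A \<in> carrier_mat n n" "v \<in> carrier_vec n" "i < n"
  shows "(A *\<^sub>v v) $ i = (\<Sum>j\<in>{0..<n}. A $$ (i,j) * v $ j)"
  using assms by (auto simp: scalar_prod_def)

lemma tl_mem_lemma:
  fixes L :: "real list"
  assumes "sorted_wrt (\<ge>) L" "x \<in> set L" "y \<in> set L" "x < y"
  shows "x \<in> set (tl L)"
proof (cases L)
  case Nil thus ?thesis using assms by auto
next
  case (Cons a L')
  show ?thesis
  proof (rule ccontr)
    assume "x \<notin> set (tl L)"
    hence "x = a" using assms Cons by auto
    moreover have "y \<le> a" using assms Cons by auto
    ultimately show False using assms by auto
  qed
qed

lemma tl_mem_count:
  assumes "count (mset L) x \<ge> 2"
  shows "x \<in> set (tl L)"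
proof (cases L)
  case Nil thus ?thesis using assms by auto
next
  case (Cons a L')
  show ?thesis
  proof (rule ccontr)
    assume "x \<notin> set (tl L)"
    hence xL: "x \<notin> set L'" using Cons by simp
    have "count (mset L) x = count_list L x" by (simp add: count_mset)
    also have "\<dots> \<le> 1" using Cons xL by (simp add: count_list_0_iff)
    finally show False using assms by simp
  qed
qed

lemma eigs_desc_props:
  fixes A :: "real mat"
  assumes "A \<in> carrier_mat n n"
  shows "sorted_wrt (\<ge>) (eigs_desc A)" "mset (eigs_desc A) = proots (char_poly A)"
proof -
  show "sorted_wrt (\<ge>) (eigs_desc A)"
    unfolding eigs_desc_def sorted_wrt_rev
    using sorted_sorted_list_of_multiset[of "proots (char_poly A)"]
    by (metis (no_types, lifting) sorted_wrt_mono_rel)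
  show "mset (eigs_desc A) = proots (char_poly A)"
    unfolding eigs_desc_def by simp
qed

lemma eig_gap_bound:
  fixes A :: "real mat" and g :: "real vec"
  assumes A: "A \<in> carrier_mat n n"
    and rows: "\<And>i. i < n \<Longrightarrow> (\<Sum>j\<in>{0..<n}. A $$ (i,j)) = 1"
    and g: "g \<in> carrier_vec n" and ev: "A *\<^sub>v g = e \<cdot>\<^sub>v g"
    and nc: "i0 < n" "j0 < n" "g $ i0 \<noteq> g $ j0"
    and gap: "lambda2_le A b" and b1: "b < 1"
  shows "e \<le> b"
proof -
  let ?c = "char_poly A"
  define one where "one = vec n (\<lambda>_. 1::real)"
  have one_c: "one \<in> carrier_vec n" unfolding one_def by simp
  have one_ev: "A *\<^sub>v one = 1 \<cdot>\<^sub>v one"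
    by (rule eq_vecI, insert A rows, auto simp: one_def scalar_prod_def)
  have n0: "0 < n" using nc by auto
  have "one \<noteq> 0\<^sub>v n" using n0 unfolding one_def
    by (metis index_vec index_zero_vec(1) zero_neq_one)
  hence "eigenvector A one 1" using one_c one_ev A unfolding eigenvector_def by auto
  hence r1: "poly ?c 1 = 0" using eigenvalue_root_char_poly[OF A] eigenvalue_def by blast
  have g0: "g \<noteq> 0\<^sub>v n" using nc by auto
  hence "eigenvector A g e" using g ev A unfolding eigenvector_def by auto
  hence re: "poly ?c e = 0" using eigenvalue_root_char_poly[OF A] eigenvalue_def by blast
  have dc: "degree ?c = n" "coeff ?c n = 1" using degree_monic_char_poly[OF A] by auto
  hence c0: "?c \<noteq> 0" by auto
  let ?L = "eigs_desc A"
  have sortL: "sorted_wrt (\<ge>) ?L" and msetL: "mset ?L = proots ?c"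
    using eigs_desc_props[OF A] by auto
  have setL: "set ?L = {x. poly ?c x = 0}"
    by (metis msetL set_mset_mset set_count_proots c0)
  have tlb: "\<And>\<mu>. \<mu> \<in> set (tl ?L) \<Longrightarrow> \<mu> \<le> b" using gap unfolding lambda2_le_def by auto
  show ?thesis
  proof (cases "e = 1")
    case True
    have ij: "i0 \<noteq> j0" using nc by auto
    have n2: "n \<ge> 2" using nc ij by auto
    have dz: "poly (char_poly (mat_delete A i i)) 1 = 0" if i: "i < n" for i
    proof -
      define w where "w = vec (n-1) (\<lambda>j. g $ insert_index i j - g $ i)"
      have Ad: "mat_delete A i i \<in> carrier_mat (n-1) (n-1)" using mat_delete_carrier[OF A] .
      have wc: "w \<in> carrier_vec (n-1)" unfolding w_def by simp
      obtain k where k: "k < n" "g $ k \<noteq> g $ i" using nc by (cases "g $ i0 = g $ i") auto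
      hence ki: "k \<noteq> i" by auto
      have dk: "delete_index i k < n - 1" using k ki i unfolding delete_index_def by auto
      have "w $ delete_index i k \<noteq> 0" using dk k ki unfolding w_def
        by (simp add: insert_delete_index)
      hence w0: "w \<noteq> 0\<^sub>v (n-1)" using dk by auto
      have wev: "mat_delete A i i *\<^sub>v w = 1 \<cdot>\<^sub>v w"
      proof (rule eq_vecI)
        show "dim_vec (mat_delete A i i *\<^sub>v w) = dim_vec (1 \<cdot>\<^sub>v w)" using Ad wc A by simp
        fix j assume "j < dim_vec (1 \<cdot>\<^sub>v w)"
        hence j: "j < n - 1" using wc by simp
        let ?r = "insert_index i j"
        have r: "?r < n" using j i unfolding insert_index_def by auto
        have "(mat_delete A i i *\<^sub>v w) $ j = (\<Sum>j2\<in>{0..<n-1}. mat_delete A i i $$ (j,j2) * w $ j2)"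
          using mult_mat_vec_nth[OF Ad wc j] .
        also have "\<dots> = (\<Sum>j2\<in>{0..<n-1}. (\<lambda>k. A $$ (?r, k) * (g $ k - g $ i)) (insert_index i j2))"
          using j A unfolding w_def mat_delete_def insert_index_def by (intro sum.cong) auto
        also have "\<dots> = (\<Sum>k\<in>{0..<n}-{i}. A $$ (?r, k) * (g $ k - g $ i))"
          by (rule sum_insert_index[OF i])
        also have "\<dots> = (\<Sum>k\<in>{0..<n}. A $$ (?r, k) * (g $ k - g $ i))"
          using i by (intro sum.mono_neutral_left) auto
        also have "\<dots> = (\<Sum>k\<in>{0..<n}. A $$ (?r, k) * g $ k) - g $ i * (\<Sum>k\<in>{0..<n}. A $$ (?r, k))"
          by (simp add: algebra_simps sum_subtractf sum_distrib_left)
        also have "(\<Sum>k\<in>{0..<n}. A $$ (?r, k) * g $ k) = g $ ?r"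
          using mult_mat_vec_nth[OF A g r] ev True g r by simp
        also have "(\<Sum>k\<in>{0..<n}. A $$ (?r, k)) = 1" using rows r by simp
        finally show "(mat_delete A i i *\<^sub>v w) $ j = (1 \<cdot>\<^sub>v w) $ j"
          using j unfolding w_def by simp
      qed
      have "eigenvector (mat_delete A i i) w 1" using Ad wc w0 wev unfolding eigenvector_def by auto
      thus ?thesis using eigenvalue_root_char_poly[OF Ad] eigenvalue_def by blast
    qed
    have "poly (pderiv ?c) 1 = 0"
      unfolding pderiv_char_poly[OF A] poly_sum using dz by simp
    moreover have "pderiv ?c \<noteq> 0" using dc n2 by (simp add: pderiv_eq_0_iff)
    ultimately have "order 1 (pderiv ?c) \<noteq> 0" using order_root by blast
    hence "order 1 ?c \<ge> 2" using order_pderiv[OF c0 r1] by simp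
    hence "count (mset ?L) 1 \<ge> 2" using msetL c0 by simp
    hence "1 \<in> set (tl ?L)" by (rule tl_mem_count)
    hence "1 \<le> b" using tlb by blast
    thus ?thesis using b1 by simp
  next
    case False
    show ?thesis
    proof (cases "e < 1")
      case True
      have "e \<in> set (tl ?L)" using tl_mem_lemma[OF sortL, of e 1] setL re r1 True by auto
      thus ?thesis using tlb by blast
    next
      case F2: False
      hence "1 < e" using False by simp
      hence "1 \<in> set (tl ?L)" using tl_mem_lemma[OF sortL, of 1 e] setL re r1 by auto
      hence "1 \<le> b" using tlb by blast
      thus ?thesis using b1 by simp
    qed
  qed
qed

definition ksub :: "'a set \<Rightarrow> nat \<Rightarrow> 'a set set" where
  "ksub t k = {x. x \<subseteq> t \<and> card x = k}"

lemma finite_ksub[simp]: "finite t \<Longrightarrow> finite (ksub t k)"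
  unfolding ksub_def by (rule finite_subset[of _ "Pow t"]) auto

lemma card_ksub: "finite t \<Longrightarrow> card (ksub t k) = card t choose k"
  unfolding ksub_def by (rule n_subsets)

lemma ksub_mem: "x \<in> ksub t k \<longleftrightarrow> x \<subseteq> t \<and> card x = k"
  unfolding ksub_def by simp

lemma sum_remove_vertex:
  assumes t: "finite t" "t \<noteq> {}"
  shows "(\<Sum>v\<in>t. G (t - {v})) = (\<Sum>u\<in>ksub t (card t - 1). (G u :: real))"
proof -
  have inj: "inj_on (\<lambda>v. t - {v}) t" by (rule inj_onI) auto
  have im: "(\<lambda>v. t - {v}) ` t = ksub t (card t - 1)"
  proof
    show "(\<lambda>v. t - {v}) ` t \<subseteq> ksub t (card t - 1)" using t by (auto simp: ksub_mem)
    show "ksub t (card t - 1) \<subseteq> (\<lambda>v. t - {v}) ` t"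
    proof
      fix u assume "u \<in> ksub t (card t - 1)"
      hence u: "u \<subseteq> t" "card u = card t - 1" by (auto simp: ksub_mem)
      have "card t > 0" using t by (simp add: card_gt_0_iff)
      hence "card (t - u) = 1" using u t by (simp add: card_Diff_subset finite_subset)
      then obtain v where v: "t - u = {v}" by (auto simp: card_Suc_eq)
      hence "u = t - {v}" "v \<in> t" using u by auto
      thus "u \<in> (\<lambda>v. t - {v}) ` t" by blast
    qed
  qed
  show ?thesis unfolding im[symmetric] by (subst sum.reindex[OF inj]) simp
qed

lemma sum_add_vertex:
  assumes t: "finite t" and s: "s \<subseteq> t"
  shows "(\<Sum>w\<in>t-s. H (insert w s)) = (\<Sum>x\<in>{x\<in>ksub t (Suc (card s)). s \<subseteq> x}. (H x :: real))"
proof -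
  have inj: "inj_on (\<lambda>w. insert w s) (t - s)" by (rule inj_onI) auto
  have fs: "finite s" using t s finite_subset by blast
  have im: "(\<lambda>w. insert w s) ` (t - s) = {x\<in>ksub t (Suc (card s)). s \<subseteq> x}"
  proof
    show "(\<lambda>w. insert w s) ` (t - s) \<subseteq> {x\<in>ksub t (Suc (card s)). s \<subseteq> x}"
      using s fs by (auto simp: ksub_mem)
    show "{x\<in>ksub t (Suc (card s)). s \<subseteq> x} \<subseteq> (\<lambda>w. insert w s) ` (t - s)"
    proof
      fix x assume "x \<in> {x\<in>ksub t (Suc (card s)). s \<subseteq> x}"
      hence x: "x \<subseteq> t" "card x = Suc (card s)" "s \<subseteq> x" by (auto simp: ksub_mem)
      have fx: "finite x" using x t finite_subset by blast
      have "card (x - s) = 1" using x fs fx by (simp add: card_Diff_subset)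
      then obtain w where w: "x - s = {w}" by (auto simp: card_Suc_eq)
      hence "x = insert w s" "w \<in> t - s" using x by auto
      thus "x \<in> (\<lambda>w. insert w s) ` (t - s)" by blast
    qed
  qed
  show ?thesis unfolding im[symmetric] by (subst sum.reindex[OF inj]) simp
qed

locale cplx =
  fixes Xd :: "'v set set" and p :: "'v set \<Rightarrow> real" and d :: nat
  assumes fin: "finite Xd"
    and unif: "\<And>s. s \<in> Xd \<Longrightarrow> finite s \<and> card s = d" and d_pos: "d \<ge> 1"
    and p_pos: "\<And>s. s \<in> Xd \<Longrightarrow> p s > 0" and p_sum: "(\<Sum>s\<in>Xd. p s) = 1"
begin

definition W :: "'v set \<Rightarrow> real" where
  "W u = (\<Sum>t\<in>Xd. if u \<subseteq> t then p t else 0)"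

definition mh :: "('v set \<Rightarrow> real) \<Rightarrow> 'v set \<Rightarrow> real" where
  "mh h u = (\<Sum>t\<in>Xd. if u \<subseteq> t then p t * h t else 0) / W u"

definition ip :: "('v set \<Rightarrow> real) \<Rightarrow> ('v set \<Rightarrow> real) \<Rightarrow> real" where
  "ip a b = (\<Sum>t\<in>Xd. p t * a t * b t)"

definition Pop :: "('v set \<Rightarrow> real) \<Rightarrow> 'v set \<Rightarrow> real" where
  "Pop h s = (\<Sum>s'\<in>Xd. down_up Xd p d s s' * h s')"

definition U :: "'v set set" where
  "U = (\<Union>t\<in>Xd. ksub t (d - 1))"

lemma finU: "finite U"
  unfolding U_def using fin unif by auto

lemma W_nonneg: "W u \<ge> 0"
  unfolding W_def using p_pos by (intro sum_nonneg) (auto intro: less_imp_le)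

lemma W_pos: assumes "t \<in> Xd" "u \<subseteq> t" shows "W u > 0"
proof -
  have "W u \<ge> (if u \<subseteq> t then p t else 0)" unfolding W_def
    using assms fin p_pos by (intro member_le_sum) (auto intro: less_imp_le)
  thus ?thesis using assms p_pos[OF assms(1)] by auto
qed

lemma U_mem: "u \<in> U \<Longrightarrow> card u = d - 1 \<and> (\<exists>t\<in>Xd. u \<subseteq> t)"
  unfolding U_def by (auto simp: ksub_mem)

lemma W_pos_U: "u \<in> U \<Longrightarrow> W u > 0"
  using U_mem W_pos by blast

lemma DCtop:
  "(\<Sum>t\<in>Xd. \<Sum>v\<in>t. G t (t - {v})) = (\<Sum>u\<in>U. \<Sum>t\<in>Xd. if u \<subseteq> t then G t u else (0::real))"
proof -
  have "(\<Sum>t\<in>Xd. \<Sum>v\<in>t. G t (t - {v})) = (\<Sum>t\<in>Xd. \<Sum>u\<in>ksub t (d - 1). G t u)"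
  proof (rule sum.cong[OF refl])
    fix t assume t: "t \<in> Xd"
    hence "finite t" "t \<noteq> {}" "card t = d" using unif d_pos by fastforce+
    thus "(\<Sum>v\<in>t. G t (t - {v})) = (\<Sum>u\<in>ksub t (d - 1). G t u)"
      using sum_remove_vertex[of t "G t"] by simp
  qed
  also have "\<dots> = (\<Sum>t\<in>Xd. \<Sum>u\<in>U. if u \<subseteq> t then G t u else 0)"
  proof (rule sum.cong[OF refl])
    fix t assume t: "t \<in> Xd"
    have sub: "ksub t (d - 1) \<subseteq> U" unfolding U_def using t by auto
    have "(\<Sum>u\<in>U. if u \<subseteq> t then G t u else 0) = (\<Sum>u\<in>U. if u \<in> ksub t (d-1) then G t u else 0)"
      by (intro sum.cong) (auto simp: ksub_mem dest: U_mem)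
    also have "\<dots> = (\<Sum>u\<in>ksub t (d-1). G t u)"
      using sub finU by (simp add: sum.If_cases Int_absorb1)
    finally show "(\<Sum>u\<in>ksub t (d - 1). G t u) = (\<Sum>u\<in>U. if u \<subseteq> t then G t u else 0)" by simp
  qed
  also have "\<dots> = (\<Sum>u\<in>U. \<Sum>t\<in>Xd. if u \<subseteq> t then G t u else 0)"
    by (rule sum.swap)
  finally show ?thesis .
qed

lemma Pop_eq:
  assumes s: "s \<in> Xd"
  shows "Pop h s = (\<Sum>v\<in>s. mh h (s - {v})) / d"
proof -
  have "Pop h s = (\<Sum>s'\<in>Xd. (\<Sum>v\<in>s. (if s - {v} \<subseteq> s' then p s' / W (s - {v}) else 0)) * h s' * (1 / d))"
    unfolding Pop_def down_up_def W_def by (intro sum.cong) auto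
  also have "\<dots> = (\<Sum>s'\<in>Xd. (\<Sum>v\<in>s. (if s - {v} \<subseteq> s' then p s' / W (s - {v}) else 0)) * h s') / d"
    by (simp only: sum_distrib_right[symmetric]) simp
  also have "(\<Sum>s'\<in>Xd. (\<Sum>v\<in>s. (if s - {v} \<subseteq> s' then p s' / W (s - {v}) else 0)) * h s')
      = (\<Sum>v\<in>s. \<Sum>s'\<in>Xd. (if s - {v} \<subseteq> s' then p s' * h s' else 0) / W (s - {v}))"
    by (subst sum.swap) (auto simp: sum_distrib_right intro!: sum.cong)
  also have "\<dots> = (\<Sum>v\<in>s. mh h (s - {v}))"
    unfolding mh_def by (simp add: sum_divide_distrib)
  finally show ?thesis .
qed

lemma sumW_mh: "u \<in> U \<Longrightarrow> (\<Sum>t\<in>Xd. if u \<subseteq> t then p t * h t else 0) = W u * mh h u"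
  unfolding mh_def using W_pos_U[of u] by simp

lemma ip_Pop: "ip a (Pop b) = (\<Sum>u\<in>U. W u * mh a u * mh b u) / d"
proof -
  have "ip a (Pop b) = (\<Sum>t\<in>Xd. \<Sum>v\<in>t. p t * a t * mh b (t - {v})) / d"
    unfolding ip_def by (simp add: Pop_eq sum_divide_distrib sum_distrib_left)
  also have "(\<Sum>t\<in>Xd. \<Sum>v\<in>t. p t * a t * mh b (t - {v}))
     = (\<Sum>u\<in>U. \<Sum>t\<in>Xd. if u \<subseteq> t then p t * a t * mh b u else 0)"
    by (rule DCtop)
  also have "\<dots> = (\<Sum>u\<in>U. (\<Sum>t\<in>Xd. if u \<subseteq> t then p t * a t else 0) * mh b u)"
    by (auto simp: sum_distrib_right intro!: sum.cong)
  also have "\<dots> = (\<Sum>u\<in>U. W u * mh a u * mh b u)"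
    by (intro sum.cong) (auto simp: sumW_mh)
  finally show ?thesis .
qed

lemma ip_Pop_sym: "ip a (Pop b) = ip b (Pop a)"
  unfolding ip_Pop by (simp add: mult.commute mult.left_commute)

lemma ip_sym: "ip a b = ip b a"
  unfolding ip_def by (simp add: mult.commute mult.left_commute)

lemma Dc_eq:
  "(\<Sum>t\<in>Xd. \<Sum>v\<in>t. p t * (h t - c (t - {v}))\<^sup>2)
     = d * (ip h h - ip h (Pop h)) + (\<Sum>u\<in>U. W u * (mh h u - c u)\<^sup>2)"
proof -
  have A: "(\<Sum>t\<in>Xd. \<Sum>v\<in>t. p t * (h t - c (t - {v}))\<^sup>2)
     = (\<Sum>u\<in>U. \<Sum>t\<in>Xd. if u \<subseteq> t then p t * (h t - c u)\<^sup>2 else 0)"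
    by (rule DCtop)
  have B: "(\<Sum>t\<in>Xd. \<Sum>v\<in>t. p t * (h t)\<^sup>2)
     = (\<Sum>u\<in>U. \<Sum>t\<in>Xd. if u \<subseteq> t then p t * (h t)\<^sup>2 else 0)"
    by (rule DCtop)
  have B2: "(\<Sum>t\<in>Xd. \<Sum>v\<in>t. p t * (h t)\<^sup>2) = d * ip h h"
    unfolding ip_def sum_distrib_left using unif
    by (intro sum.cong) (auto simp: power2_eq_square)
  have per: "(\<Sum>t\<in>Xd. if u \<subseteq> t then p t * (h t - c u)\<^sup>2 else 0)
      = (\<Sum>t\<in>Xd. if u \<subseteq> t then p t * (h t)\<^sup>2 else 0) - W u * (mh h u)\<^sup>2 + W u * (mh h u - c u)\<^sup>2"
    if u: "u \<in> U" for u
  proof -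
    have "(\<Sum>t\<in>Xd. if u \<subseteq> t then p t * (h t - c u)\<^sup>2 else 0)
      = (\<Sum>t\<in>Xd. if u \<subseteq> t then p t * (h t)\<^sup>2 else 0)
        - 2 * c u * (\<Sum>t\<in>Xd. if u \<subseteq> t then p t * h t else 0) + (c u)\<^sup>2 * W u"
      unfolding W_def sum_distrib_left sum_subtractf[symmetric] sum.distrib[symmetric]
      by (intro sum.cong) (auto simp: power2_eq_square algebra_simps)
    also have "\<dots> = (\<Sum>t\<in>Xd. if u \<subseteq> t then p t * (h t)\<^sup>2 else 0)
        - 2 * c u * (W u * mh h u) + (c u)\<^sup>2 * W u"
      using sumW_mh[OF u] by simp
    finally show ?thesis by (simp add: power2_eq_square algebra_simps)
  qed
  have C: "(\<Sum>u\<in>U. W u * (mh h u)\<^sup>2) = d * ip h (Pop h)"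
    unfolding ip_Pop using d_pos by (simp add: power2_eq_square mult.assoc)
  show ?thesis unfolding A using B B2 C
    by (simp add: per sum.distrib sum_subtractf right_diff_distrib)
qed

definition Q :: "('v set \<Rightarrow> real) \<Rightarrow> real" where
  "Q h = ip h h - ip h (Pop h)"

lemma p_nonneg: "t \<in> Xd \<Longrightarrow> p t \<ge> 0"
  using p_pos less_imp_le by blast

lemma Dc_nonneg: "(\<Sum>t\<in>Xd. \<Sum>v\<in>t. p t * (h t - c (t - {v}))\<^sup>2) \<ge> 0"
  by (intro sum_nonneg mult_nonneg_nonneg p_nonneg) auto

lemma Q_le: "d * Q h \<le> (\<Sum>t\<in>Xd. \<Sum>v\<in>t. p t * (h t - c (t - {v}))\<^sup>2)"
proof -
  have "(\<Sum>u\<in>U. W u * (mh h u - c u)\<^sup>2) \<ge> 0" using W_nonneg by (intro sum_nonneg) auto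
  thus ?thesis unfolding Q_def using Dc_eq[of h c] by simp
qed

lemma Q_nonneg: "Q h \<ge> 0"
proof -
  have "d * Q h = (\<Sum>t\<in>Xd. \<Sum>v\<in>t. p t * (h t - mh h (t - {v}))\<^sup>2)"
    unfolding Q_def using Dc_eq[of h "mh h"] by simp
  hence "d * Q h \<ge> 0" using Dc_nonneg by simp
  thus ?thesis using d_pos by (simp add: zero_le_mult_iff)
qed

lemma Pop_one: assumes "s \<in> Xd" shows "Pop (\<lambda>_. 1) s = 1"
proof -
  have "mh (\<lambda>_. 1) (s - {v}) = 1" if "v \<in> s" for v
  proof -
    have W0: "W (s - {v}) > 0" using W_pos[OF assms] by auto
    have "(\<Sum>t\<in>Xd. if s - {v} \<subseteq> t then p t * (\<lambda>_. 1::real) t else 0) = W (s - {v})"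
      unfolding W_def by (intro sum.cong) auto
    thus ?thesis unfolding mh_def using W0 by simp
  qed
  hence "Pop (\<lambda>_. 1) s = card s / d" using Pop_eq[OF assms] by simp
  thus ?thesis using unif[OF assms] d_pos by simp
qed

lemma Pop_lin: "Pop (\<lambda>t. a * f t + b * g t) s = a * Pop f s + b * Pop g s"
  unfolding Pop_def by (simp add: sum.distrib sum_distrib_left algebra_simps)

lemma Pop_cong: "(\<And>t. t \<in> Xd \<Longrightarrow> f t = g t) \<Longrightarrow> Pop f s = Pop g s"
  unfolding Pop_def by simp

lemma ip_cong: "(\<And>t. t \<in> Xd \<Longrightarrow> f t = f' t) \<Longrightarrow> (\<And>t. t \<in> Xd \<Longrightarrow> g t = g' t) \<Longrightarrow> ip f g = ip f' g'"
  unfolding ip_def by simp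

lemma ip_lin: "ip (\<lambda>t. a * f t + b * g t) h = a * ip f h + b * ip g h"
  unfolding ip_def by (simp add: sum.distrib sum_distrib_left algebra_simps)

lemma ip_self_nonneg: "ip h h \<ge> 0"
  unfolding ip_def by (intro sum_nonneg) (metis mult.assoc mult_nonneg_nonneg p_nonneg zero_le_square)

lemma ip_self_zero: assumes "ip h h = 0" "t \<in> Xd" shows "h t = 0"
proof -
  have "\<forall>t\<in>Xd. p t * h t * h t = 0"
    using assms(1) fin unfolding ip_def
    by (subst sum_nonneg_eq_0_iff[symmetric]) (auto, metis mult.assoc mult_nonneg_nonneg p_nonneg zero_le_square)
  thus ?thesis using assms(2) p_pos[OF assms(2)] by auto
qed

lemma Q_scale: "Q (\<lambda>t. c * h t) = c\<^sup>2 * Q h"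
proof -
  have P: "Pop (\<lambda>t. c * h t) s = c * Pop h s" for s
    using Pop_lin[of c h 0 h s] by simp
  show ?thesis unfolding Q_def ip_def P
    by (simp add: sum_distrib_left algebra_simps power2_eq_square sum_subtractf)
qed

lemma Q_expand: "Q (\<lambda>t. g t + \<tau> * h t) = Q g + 2 * \<tau> * (ip g h - ip g (Pop h)) + \<tau>\<^sup>2 * Q h"
proof -
  have P: "Pop (\<lambda>t. g t + \<tau> * h t) s = Pop g s + \<tau> * Pop h s" for s
    using Pop_lin[of 1 g \<tau> h s] by simp
  have e1: "ip (\<lambda>t. g t + \<tau> * h t) (\<lambda>t. g t + \<tau> * h t) = ip g g + 2 * \<tau> * ip g h + \<tau>\<^sup>2 * ip h h"
  proof -
    have "ip (\<lambda>t. g t + \<tau> * h t) (\<lambda>t. g t + \<tau> * h t)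
        = (\<Sum>t\<in>Xd. p t * g t * g t + 2 * \<tau> * (p t * g t * h t) + \<tau>\<^sup>2 * (p t * h t * h t))"
      unfolding ip_def by (intro sum.cong) (auto simp: algebra_simps power2_eq_square)
    thus ?thesis unfolding ip_def by (simp add: sum.distrib sum_distrib_left)
  qed
  have e2: "ip (\<lambda>t. g t + \<tau> * h t) (Pop (\<lambda>t. g t + \<tau> * h t))
      = ip g (Pop g) + \<tau> * ip g (Pop h) + \<tau> * ip h (Pop g) + \<tau>\<^sup>2 * ip h (Pop h)"
  proof -
    have "ip (\<lambda>t. g t + \<tau> * h t) (Pop (\<lambda>t. g t + \<tau> * h t))
        = (\<Sum>t\<in>Xd. p t * g t * Pop g t + \<tau> * (p t * g t * Pop h t) + \<tau> * (p t * h t * Pop g t) + \<tau>\<^sup>2 * (p t * h t * Pop h t))"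
      unfolding ip_def P by (intro sum.cong) (auto simp: algebra_simps power2_eq_square)
    thus ?thesis unfolding ip_def by (simp add: sum.distrib sum_distrib_left)
  qed
  have "ip h (Pop g) = ip g (Pop h)" by (rule ip_Pop_sym)
  moreover have "ip g h = ip h g" by (rule ip_sym)
  ultimately show ?thesis unfolding Q_def e1 e2 by (simp add: algebra_simps)
qed


lemma quad_nonneg_lin_zero:
  fixes \<beta> \<gamma> :: real
  assumes "\<And>\<tau>. 2 * \<tau> * \<beta> + \<tau>\<^sup>2 * \<gamma> \<ge> 0"
  shows "\<beta> = 0"
proof (rule ccontr)
  assume b: "\<beta> \<noteq> 0"
  define A where "A = \<bar>\<gamma>\<bar> + 1"
  have pos: "A > 0" and ga: "\<gamma> \<le> A" unfolding A_def by auto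
  define \<tau> where "\<tau> = - \<beta> / A"
  have "2 * \<tau> * \<beta> + \<tau>\<^sup>2 * \<gamma> \<le> 2 * \<tau> * \<beta> + \<tau>\<^sup>2 * A"
    using ga by (intro add_left_mono mult_left_mono) auto
  also have "\<dots> = - \<beta>\<^sup>2 / A"
    unfolding \<tau>_def using pos by (simp add: field_simps power2_eq_square)
  also have "\<dots> < 0" using b pos by (simp add: divide_pos_pos)
  finally show False using assms[of \<tau>] by simp
qed

lemma ip_lin2: "ip h (\<lambda>t. a * f t + b * g t) = a * ip h f + b * ip h g"
  using ip_lin[of a f b g h] ip_sym by metis

lemma lagrange:
  assumes g1: "ip g (\<lambda>_. 1) = 0" and g2: "ip g g = 1"
    and minQ: "\<And>h. ip h (\<lambda>_. 1) = 0 \<Longrightarrow> Q h \<ge> Q g * ip h h"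
  shows "\<And>s. s \<in> Xd \<Longrightarrow> Pop g s = (1 - Q g) * g s"
proof -
  define \<mu> where "\<mu> = Q g"
  have orth: "ip g h - ip g (Pop h) - \<mu> * ip g h = 0" if h: "ip h (\<lambda>_. 1) = 0" for h
  proof -
    have "2 * \<tau> * (ip g h - ip g (Pop h) - \<mu> * ip g h) + \<tau>\<^sup>2 * (Q h - \<mu> * ip h h) \<ge> 0" for \<tau>
    proof -
      have m: "ip (\<lambda>t. g t + \<tau> * h t) (\<lambda>_. 1) = 0"
        using ip_lin[of 1 g \<tau> h "\<lambda>_. 1"] g1 h by simp
      have i1: "Q (\<lambda>t. g t + \<tau> * h t) \<ge> \<mu> * ip (\<lambda>t. g t + \<tau> * h t) (\<lambda>t. g t + \<tau> * h t)"
        using minQ[OF m] unfolding \<mu>_def by simp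
      have a1: "ip (\<lambda>t. g t + \<tau> * h t) (\<lambda>t. g t + \<tau> * h t)
           = ip g (\<lambda>t. g t + \<tau> * h t) + \<tau> * ip h (\<lambda>t. g t + \<tau> * h t)"
        using ip_lin[of 1 g \<tau> h "\<lambda>t. g t + \<tau> * h t"] by simp
      have a2: "ip g (\<lambda>t. g t + \<tau> * h t) = ip g g + \<tau> * ip g h"
        using ip_lin2[of g 1 g \<tau> h] by simp
      have a3: "ip h (\<lambda>t. g t + \<tau> * h t) = ip g h + \<tau> * ip h h"
        using ip_lin2[of h 1 g \<tau> h] ip_sym[of h g] by simp
      have e: "ip (\<lambda>t. g t + \<tau> * h t) (\<lambda>t. g t + \<tau> * h t) = 1 + 2 * \<tau> * ip g h + \<tau>\<^sup>2 * ip h h"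
        unfolding a1 a2 a3 g2 by (simp add: algebra_simps power2_eq_square)
      have "Q g + 2 * \<tau> * (ip g h - ip g (Pop h)) + \<tau>\<^sup>2 * Q h \<ge> \<mu> * (1 + 2 * \<tau> * ip g h + \<tau>\<^sup>2 * ip h h)"
        using i1 unfolding e Q_expand .
      thus ?thesis unfolding \<mu>_def by (simp add: algebra_simps)
    qed
    thus ?thesis by (intro quad_nonneg_lin_zero) auto
  qed
  define r where "r = (\<lambda>t. (1 - \<mu>) * g t + (-1) * Pop g t)"
  have rip: "ip r h = (1 - \<mu>) * ip g h - ip h (Pop g)" for h
    unfolding r_def using ip_lin[of "1 - \<mu>" g "-1" "Pop g" h] ip_sym[of "Pop g" h] by simp
  have r1: "ip r (\<lambda>_. 1) = 0"
  proof -
    have "ip (\<lambda>_. 1) (Pop g) = ip g (Pop (\<lambda>_. 1))" by (rule ip_Pop_sym)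
    also have "\<dots> = ip g (\<lambda>_. 1)" by (rule ip_cong) (auto simp: Pop_one)
    finally have "ip (\<lambda>_. 1) (Pop g) = 0" using g1 by simp
    thus ?thesis unfolding rip using g1 ip_sym[of g "\<lambda>_. 1"] by simp
  qed
  have "ip r r = 0"
  proof -
    have "ip r r = (1 - \<mu>) * ip g r - ip r (Pop g)" by (rule rip)
    also have "ip r (Pop g) = ip g (Pop r)" by (rule ip_Pop_sym)
    also have "(1 - \<mu>) * ip g r - ip g (Pop r) = ip g r - ip g (Pop r) - \<mu> * ip g r"
      by (simp add: algebra_simps)
    also have "\<dots> = 0" by (rule orth[OF r1])
    finally show ?thesis .
  qed
  hence "r s = 0" if "s \<in> Xd" for s using ip_self_zero that by blast
  thus "\<And>s. s \<in> Xd \<Longrightarrow> Pop g s = (1 - Q g) * g s" unfolding r_def \<mu>_def by auto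
qed

lemma Q_cong: assumes "\<And>t. t \<in> Xd \<Longrightarrow> f t = g t" shows "Q f = Q g"
proof -
  have "ip f f = ip g g" by (rule ip_cong) (auto simp: assms)
  moreover have "ip f (Pop f) = ip g (Pop g)"
    by (rule ip_cong) (auto simp: assms intro: Pop_cong)
  ultimately show ?thesis unfolding Q_def by simp
qed

lemma pterm_nonneg: "t \<in> Xd \<Longrightarrow> 0 \<le> p t * h t * h t"
  by (metis mult.assoc mult_nonneg_nonneg p_nonneg zero_le_square)

lemma ip_term_le: assumes "s \<in> Xd" shows "p s * (h s)\<^sup>2 \<le> ip h h"
proof -
  have "p s * h s * h s \<le> ip h h" unfolding ip_def using fin assms
    by (intro member_le_sum) (auto simp: pterm_nonneg)
  thus ?thesis by (simp add: power2_eq_square mult.assoc)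
qed

lemma abs_bound: fixes x q :: real assumes "q > 0" "q * x\<^sup>2 \<le> 1" shows "\<bar>x\<bar> \<le> 1 + 1 / q"
proof (cases "\<bar>x\<bar> \<le> 1")
  case True thus ?thesis using assms by (simp add: add_increasing2)
next
  case False
  hence "\<bar>x\<bar> * 1 \<le> \<bar>x\<bar> * \<bar>x\<bar>" by (intro mult_left_mono) auto
  hence "\<bar>x\<bar> \<le> x\<^sup>2" by (simp add: power2_eq_square)
  hence "q * \<bar>x\<bar> \<le> q * x\<^sup>2" using assms by (intro mult_left_mono) auto
  hence "q * \<bar>x\<bar> \<le> 1" using assms by linarith
  hence "\<bar>x\<bar> \<le> 1 / q" using assms by (simp add: field_simps)
  thus ?thesis by simp
qed

lemma cont_eval: "t \<in> Xd \<Longrightarrow> continuous_map (product_topology (\<lambda>_. euclideanreal) Xd) euclideanreal (\<lambda>h. h t)"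
  using continuous_map_product_projection[of t Xd "\<lambda>_. euclideanreal"] by simp

lemma cont_ip1: "continuous_map (product_topology (\<lambda>_. euclideanreal) Xd) euclideanreal (\<lambda>h. ip h (\<lambda>_. 1))"
  unfolding ip_def
  by (intro continuous_map_sum fin continuous_map_real_mult cont_eval continuous_map_const[THEN iffD2]) auto

lemma cont_ip2: "continuous_map (product_topology (\<lambda>_. euclideanreal) Xd) euclideanreal (\<lambda>h. ip h h)"
  unfolding ip_def
  by (intro continuous_map_sum fin continuous_map_real_mult cont_eval continuous_map_const[THEN iffD2]) auto

lemma cont_Q: "continuous_map (product_topology (\<lambda>_. euclideanreal) Xd) euclideanreal Q"
proof -
  have "continuous_map (product_topology (\<lambda>_. euclideanreal) Xd) euclideanreal (\<lambda>h. ip h h - ip h (Pop h))"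
    unfolding ip_def Pop_def
    by (intro continuous_map_diff continuous_map_sum fin continuous_map_real_mult cont_eval continuous_map_const[THEN iffD2]) auto
  thus ?thesis unfolding Q_def[abs_def] .
qed

lemma min_exists:
  assumes ex: "\<exists>h. ip h (\<lambda>_. 1) = 0 \<and> ip h h = 1"
  shows "\<exists>g. ip g (\<lambda>_. 1) = 0 \<and> ip g g = 1 \<and> (\<forall>h. ip h (\<lambda>_. 1) = 0 \<longrightarrow> Q h \<ge> Q g * ip h h)"
proof -
  define X where "X = product_topology (\<lambda>_::'v set. euclideanreal) Xd"
  define B where "B = (\<lambda>s. {-(1 + 1 / p s) .. 1 + 1 / p s})"
  define K where "K = {h \<in> PiE Xd B. ip h (\<lambda>_. 1) = 0 \<and> ip h h = 1}"
  have top: "topspace X = PiE Xd (\<lambda>_. UNIV)" unfolding X_def by simp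
  have cPi: "compactin X (PiE Xd B)" unfolding X_def B_def
    by (subst compactin_PiE) auto
  have c0: "closedin euclideanreal {0::real}" "closedin euclideanreal {1::real}"
    by (simp_all add: closed_closedin[symmetric])
  have cl1: "closedin X {h \<in> topspace X. ip h (\<lambda>_. 1) = 0}"
    using closedin_continuous_map_preimage[OF cont_ip1 c0(1)] unfolding X_def by simp
  have cl2: "closedin X {h \<in> topspace X. ip h h = 1}"
    using closedin_continuous_map_preimage[OF cont_ip2 c0(2)] unfolding X_def by simp
  have "Hausdorff_space X" unfolding X_def
    by (simp add: Hausdorff_space_product_topology)
  hence clPi: "closedin X (PiE Xd B)" using cPi compactin_imp_closedin by blast
  have Keq: "K = PiE Xd B \<inter> {h \<in> topspace X. ip h (\<lambda>_. 1) = 0} \<inter> {h \<in> topspace X. ip h h = 1}"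
    unfolding K_def top by (auto simp: PiE_def Pi_def)
  have cK: "compactin X K"
    by (rule closed_compactin[OF cPi]) (unfold Keq, auto intro!: closedin_Int clPi cl1 cl2)
  have "compactin euclideanreal (Q ` K)"
    using image_compactin[OF cK] cont_Q unfolding X_def by blast
  hence cQK: "compact (Q ` K)" by simp
  have norm_in_K: "restrict h Xd \<in> K" if h1: "ip h (\<lambda>_. 1) = 0" and h2: "ip h h = 1" for h
  proof -
    have "ip (restrict h Xd) (\<lambda>_. 1) = ip h (\<lambda>_. 1)" by (rule ip_cong) auto
    hence e1: "ip (restrict h Xd) (\<lambda>_. 1) = 0" using h1 by simp
    have "ip (restrict h Xd) (restrict h Xd) = ip h h" by (rule ip_cong) auto
    hence e2: "ip (restrict h Xd) (restrict h Xd) = 1" using h2 by simp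
    have "restrict h Xd \<in> PiE Xd B"
    proof (rule restrict_PiE_iff[THEN iffD2], intro ballI)
      fix s assume s: "s \<in> Xd"
      have "p s * (h s)\<^sup>2 \<le> 1" using ip_term_le[OF s, of h] h2 by simp
      hence "\<bar>h s\<bar> \<le> 1 + 1 / p s" using abs_bound p_pos[OF s] by blast
      thus "h s \<in> B s" unfolding B_def by (simp add: abs_le_iff)
    qed
    thus ?thesis unfolding K_def using e1 e2 by simp
  qed
  obtain h0 where "ip h0 (\<lambda>_. 1) = 0" "ip h0 h0 = 1" using ex by blast
  hence "K \<noteq> {}" using norm_in_K by blast
  hence "Q ` K \<noteq> {}" by simp
  then obtain q where q: "q \<in> Q ` K" "\<And>y. y \<in> Q ` K \<Longrightarrow> q \<le> y"
    using compact_attains_inf[OF cQK] by blast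
  then obtain g where g: "g \<in> K" "Q g = q" by blast
  have g1: "ip g (\<lambda>_. 1) = 0" and g2: "ip g g = 1" using g unfolding K_def by auto
  have gmin: "Q g \<le> Q h" if "ip h (\<lambda>_. 1) = 0" "ip h h = 1" for h
  proof -
    have "Q g \<le> Q (restrict h Xd)" using q g norm_in_K[OF that] by auto
    also have "Q (restrict h Xd) = Q h" by (rule Q_cong) simp
    finally show ?thesis .
  qed
  have "Q h \<ge> Q g * ip h h" if h1: "ip h (\<lambda>_. 1) = 0" for h
  proof (cases "ip h h = 0")
    case True thus ?thesis using Q_nonneg[of h] by simp
  next
    case False
    hence pos: "ip h h > 0" using ip_self_nonneg[of h] by simp
    define c where "c = 1 / sqrt (ip h h)"
    have c2: "c\<^sup>2 * ip h h = 1" unfolding c_def using pos by (simp add: power_divide)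
    have a1: "ip (\<lambda>t. c * h t) (\<lambda>_. 1) = 0" using ip_lin[of c h 0 h "\<lambda>_. 1"] h1 by simp
    have a2: "ip (\<lambda>t. c * h t) (\<lambda>t. c * h t) = 1"
    proof -
      have "ip (\<lambda>t. c * h t) (\<lambda>t. c * h t) = c * ip h (\<lambda>t. c * h t)" using ip_lin[of c h 0 h] by simp
      also have "ip h (\<lambda>t. c * h t) = c * ip h h" using ip_lin2[of h c h 0 h] by simp
      finally show ?thesis using c2 by (simp add: power2_eq_square mult.assoc)
    qed
    have "Q g \<le> Q (\<lambda>t. c * h t)" by (rule gmin[OF a1 a2])
    also have "\<dots> = c\<^sup>2 * Q h" by (rule Q_scale)
    finally have "Q g * ip h h \<le> c\<^sup>2 * Q h * ip h h" using pos by (simp add: mult_right_mono)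
    also have "\<dots> = Q h" using c2 by (simp add: algebra_simps)
    finally show ?thesis .
  qed
  thus ?thesis using g1 g2 by blast
qed

lemma enum_faces_props: "distinct (enum_faces Xd) \<and> set (enum_faces Xd) = Xd"
proof -
  have "\<exists>l. distinct l \<and> set l = Xd" using finite_distinct_list[OF fin] by blast
  thus ?thesis unfolding enum_faces_def by (rule someI_ex)
qed

lemma sum_list_nth: assumes "distinct l" shows "(\<Sum>j\<in>{0..<length l}. F (l ! j)) = (\<Sum>s\<in>set l. (F s :: real))"
proof -
  have inj: "inj_on (nth l) {0..<length l}" using assms by (simp add: inj_on_nth)
  have im: "nth l ` {0..<length l} = set l" by (auto simp: set_conv_nth)
  show ?thesis unfolding im[symmetric] by (subst sum.reindex[OF inj]) simp
qed

lemma eig_from_fun: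
  assumes g1: "ip g (\<lambda>_. 1) = 0" and g2: "ip g g = 1"
    and ev: "\<And>s. s \<in> Xd \<Longrightarrow> Pop g s = e * g s"
    and gap: "lambda2_le (down_up_mat Xd p d) b" and b1: "b < 1"
  shows "e \<le> b"
proof -
  define l where "l = enum_faces Xd"
  have l: "distinct l" "set l = Xd" using enum_faces_props unfolding l_def by auto
  define n where "n = length l"
  define A where "A = down_up_mat Xd p d"
  have Aeq: "A = mat n n (\<lambda>(i, j). down_up Xd p d (l ! i) (l ! j))"
    unfolding A_def down_up_mat_def l_def n_def Let_def by simp
  have A: "A \<in> carrier_mat n n" unfolding Aeq by simp
  have lin: "l ! i \<in> Xd" if "i < n" for i using that l unfolding n_def by auto
  have rows: "(\<Sum>j\<in>{0..<n}. A $$ (i,j)) = 1" if i: "i < n" for i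
  proof -
    have "(\<Sum>j\<in>{0..<n}. A $$ (i,j)) = (\<Sum>j\<in>{0..<length l}. (\<lambda>s. down_up Xd p d (l ! i) s * 1) (l ! j))"
      unfolding Aeq n_def using i n_def by (intro sum.cong) auto
    also have "\<dots> = Pop (\<lambda>_. 1) (l ! i)"
      using sum_list_nth[OF l(1), of "\<lambda>s. down_up Xd p d (l ! i) s * 1"] l(2) unfolding Pop_def by simp
    also have "\<dots> = 1" using Pop_one lin[OF i] by simp
    finally show ?thesis .
  qed
  define gv where "gv = vec n (\<lambda>i. g (l ! i))"
  have gv: "gv \<in> carrier_vec n" unfolding gv_def by simp
  have evv: "A *\<^sub>v gv = e \<cdot>\<^sub>v gv"
  proof (rule eq_vecI)
    show "dim_vec (A *\<^sub>v gv) = dim_vec (e \<cdot>\<^sub>v gv)" using A gv by simp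
    fix i assume "i < dim_vec (e \<cdot>\<^sub>v gv)"
    hence i: "i < n" using gv by simp
    have "(A *\<^sub>v gv) $ i = (\<Sum>j\<in>{0..<n}. A $$ (i,j) * gv $ j)" by (rule mult_mat_vec_nth[OF A gv i])
    also have "\<dots> = (\<Sum>j\<in>{0..<length l}. (\<lambda>s. down_up Xd p d (l ! i) s * g s) (l ! j))"
      unfolding Aeq gv_def n_def using i n_def by (intro sum.cong) auto
    also have "\<dots> = Pop g (l ! i)"
      using sum_list_nth[OF l(1), of "\<lambda>s. down_up Xd p d (l ! i) s * g s"] l(2) unfolding Pop_def by simp
    also have "\<dots> = e * g (l ! i)" using ev lin[OF i] by simp
    finally show "(A *\<^sub>v gv) $ i = (e \<cdot>\<^sub>v gv) $ i" using i unfolding gv_def by simp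
  qed
  have "\<exists>s1\<in>Xd. \<exists>s2\<in>Xd. g s1 \<noteq> g s2"
  proof (rule ccontr)
    assume "\<not> ?thesis"
    hence const: "\<And>s1 s2. s1 \<in> Xd \<Longrightarrow> s2 \<in> Xd \<Longrightarrow> g s1 = g s2" by blast
    have "Xd \<noteq> {}" using p_sum by auto
    then obtain s0 where s0: "s0 \<in> Xd" by blast
    have "ip g (\<lambda>_. 1) = (\<Sum>t\<in>Xd. p t * g s0)" unfolding ip_def
      by (intro sum.cong) (auto dest: const[OF _ s0])
    also have "\<dots> = g s0" using p_sum by (simp add: sum_distrib_right[symmetric])
    finally have "g s0 = 0" using g1 by simp
    hence "ip g g = 0" unfolding ip_def by (intro sum.neutral) (auto dest: const[OF _ s0])
    thus False using g2 by simp
  qed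
  then obtain s1 s2 where s: "s1 \<in> Xd" "s2 \<in> Xd" "g s1 \<noteq> g s2" by blast
  obtain i0 where i0: "i0 < n" "l ! i0 = s1" using s(1) l(2) unfolding n_def by (metis in_set_conv_nth)
  obtain j0 where j0: "j0 < n" "l ! j0 = s2" using s(2) l(2) unfolding n_def by (metis in_set_conv_nth)
  have "gv $ i0 \<noteq> gv $ j0" using i0 j0 s unfolding gv_def by simp
  from eig_gap_bound[OF A rows gv evv i0(1) j0(1) this] gap b1 show ?thesis unfolding A_def by blast
qed

lemma poincare:
  assumes C_pos: "C > 0" and gap: "lambda2_le (down_up_mat Xd p d) (1 - 1 / (C * real d))"
  shows "(\<Sum>t\<in>Xd. p t * (g t - (\<Sum>t\<in>Xd. p t * g t))\<^sup>2)
     \<le> C * (\<Sum>t\<in>Xd. \<Sum>v\<in>t. p t * (g t - c (t - {v}))\<^sup>2)"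
proof -
  define m where "m = (\<Sum>t\<in>Xd. p t * g t)"
  define h where "h = (\<lambda>t. g t - m)"
  have Cd: "C * real d > 0" using C_pos d_pos by simp
  have h1: "ip h (\<lambda>_. 1) = 0"
  proof -
    have "ip h (\<lambda>_. 1) = (\<Sum>t\<in>Xd. p t * g t) - m * (\<Sum>t\<in>Xd. p t)"
      unfolding ip_def h_def by (simp add: algebra_simps sum_subtractf sum_distrib_left)
    thus ?thesis unfolding m_def using p_sum by simp
  qed
  have lhs: "(\<Sum>t\<in>Xd. p t * (g t - m)\<^sup>2) = ip h h"
    unfolding ip_def h_def by (simp add: power2_eq_square mult.assoc)
  have rhs: "(\<Sum>t\<in>Xd. \<Sum>v\<in>t. p t * (g t - c (t - {v}))\<^sup>2)
     = (\<Sum>t\<in>Xd. \<Sum>v\<in>t. p t * (h t - (\<lambda>u. c u - m) (t - {v}))\<^sup>2)"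
    unfolding h_def by simp
  have Dn: "(\<Sum>t\<in>Xd. \<Sum>v\<in>t. p t * (g t - c (t - {v}))\<^sup>2) \<ge> 0" by (rule Dc_nonneg)
  have key: "ip h h \<le> C * real d * Q h"
  proof (cases "\<exists>h. ip h (\<lambda>_. 1) = 0 \<and> ip h h = 1")
    case True
    then obtain g0 where g0: "ip g0 (\<lambda>_. 1) = 0" "ip g0 g0 = 1"
      and mn: "\<And>h. ip h (\<lambda>_. 1) = 0 \<Longrightarrow> Q h \<ge> Q g0 * ip h h"
      using min_exists by blast
    have "1 - Q g0 \<le> 1 - 1 / (C * real d)"
    proof (rule eig_from_fun[OF g0 lagrange[OF g0 mn] gap])
      have "1 / (C * real d) > 0" using Cd by simp
      thus "1 - 1 / (C * real d) < 1" by linarith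
    qed
    hence q: "Q g0 \<ge> 1 / (C * real d)" by simp
    have "ip h h / (C * real d) \<le> Q g0 * ip h h"
      using q ip_self_nonneg[of h] by (metis mult_right_mono mult.commute times_divide_eq_left mult_1)
    also have "\<dots> \<le> Q h" by (rule mn[OF h1])
    finally show ?thesis using Cd by (simp add: field_simps)
  next
    case False
    have "ip h h = 0"
    proof (rule ccontr)
      assume "ip h h \<noteq> 0"
      hence pos: "ip h h > 0" using ip_self_nonneg[of h] by simp
      define c where "c = 1 / sqrt (ip h h)"
      have c2: "c\<^sup>2 * ip h h = 1" unfolding c_def using pos by (simp add: power_divide)
      have a1: "ip (\<lambda>t. c * h t) (\<lambda>_. 1) = 0" using ip_lin[of c h 0 h "\<lambda>_. 1"] h1 by simp
      have "ip (\<lambda>t. c * h t) (\<lambda>t. c * h t) = c * ip h (\<lambda>t. c * h t)" using ip_lin[of c h 0 h] by simp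
      also have "ip h (\<lambda>t. c * h t) = c * ip h h" using ip_lin2[of h c h 0 h] by simp
      finally have "ip (\<lambda>t. c * h t) (\<lambda>t. c * h t) = 1" using c2 by (simp add: power2_eq_square mult.assoc)
      thus False using False a1 by blast
    qed
    thus ?thesis using Q_nonneg[of h] Cd by simp
  qed
  have "d * Q h \<le> (\<Sum>t\<in>Xd. \<Sum>v\<in>t. p t * (h t - (\<lambda>u. c u - m) (t - {v}))\<^sup>2)" by (rule Q_le)
  hence "C * (d * Q h) \<le> C * (\<Sum>t\<in>Xd. \<Sum>v\<in>t. p t * (g t - c (t - {v}))\<^sup>2)"
    unfolding rhs[symmetric] using C_pos by simp
  thus ?thesis unfolding m_def[symmetric] lhs using key by (simp add: mult.assoc)
qed

end

lemma DCT:
  assumes T: "finite T" and K: "K \<ge> 1"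
  shows "(\<Sum>x\<in>ksub T K. \<Sum>v\<in>x. G x (x - {v})) = (\<Sum>s\<in>ksub T (K-1). \<Sum>w\<in>T-s. (G (insert w s) s :: real))"
proof -
  have "(\<Sum>x\<in>ksub T K. \<Sum>v\<in>x. G x (x - {v})) = (\<Sum>x\<in>ksub T K. \<Sum>u\<in>{u\<in>ksub T (K-1). u \<subseteq> x}. G x u)"
  proof (rule sum.cong[OF refl])
    fix x assume x: "x \<in> ksub T K"
    hence xT: "x \<subseteq> T" "card x = K" by (auto simp: ksub_mem)
    hence fx: "finite x" "x \<noteq> {}" using T K finite_subset by fastforce+
    have "ksub x (K - 1) = {u\<in>ksub T (K-1). u \<subseteq> x}" using xT unfolding ksub_def by blast
    thus "(\<Sum>v\<in>x. G x (x - {v})) = (\<Sum>u\<in>{u\<in>ksub T (K-1). u \<subseteq> x}. G x u)"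
      using sum_remove_vertex[OF fx, of "G x"] xT by simp
  qed
  also have "\<dots> = (\<Sum>u\<in>ksub T (K-1). \<Sum>x\<in>{x\<in>ksub T K. u \<subseteq> x}. G x u)"
    by (rule sum.swap_restrict) (simp_all add: T)
  also have "\<dots> = (\<Sum>s\<in>ksub T (K-1). \<Sum>w\<in>T-s. G (insert w s) s)"
  proof (rule sum.cong[OF refl])
    fix s assume s: "s \<in> ksub T (K-1)"
    hence sT: "s \<subseteq> T" "card s = K - 1" by (auto simp: ksub_mem)
    have "Suc (card s) = K" using sT K by simp
    thus "(\<Sum>x\<in>{x\<in>ksub T K. s \<subseteq> x}. G x s) = (\<Sum>w\<in>T-s. G (insert w s) s)"
      using sum_add_vertex[OF T sT(1), of "\<lambda>x. G x s"] by simp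
  qed
  finally show ?thesis .
qed

lemma VD:
  fixes a :: "'a \<Rightarrow> real"
  assumes A: "finite A"
  shows "(\<Sum>w\<in>A. (a w - c)\<^sup>2) = (\<Sum>w\<in>A. (a w - sum a A / card A)\<^sup>2) + card A * (sum a A / card A - c)\<^sup>2"
proof (cases "A = {}")
  case True thus ?thesis by simp
next
  case False
  define N where "N = real (card A)"
  define m where "m = sum a A / card A"
  have N: "N > 0" unfolding N_def using A False by (simp add: card_gt_0_iff)
  have sa: "(\<Sum>w\<in>A. a w - m) = 0"
    unfolding m_def using N N_def by (simp add: sum_subtractf)
  have "(\<Sum>w\<in>A. (a w - c)\<^sup>2) = (\<Sum>w\<in>A. (a w - m)\<^sup>2 + 2 * (m - c) * (a w - m) + (m - c)\<^sup>2)"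
    by (intro sum.cong) (auto simp: power2_eq_square algebra_simps)
  also have "\<dots> = (\<Sum>w\<in>A. (a w - m)\<^sup>2) + 2 * (m - c) * (\<Sum>w\<in>A. a w - m) + N * (m - c)\<^sup>2"
    unfolding N_def by (simp add: sum.distrib sum_distrib_left)
  finally show ?thesis using sa unfolding m_def N_def by simp
qed

lemma pair_lemma:
  fixes h :: "'a \<Rightarrow> 'a \<Rightarrow> real"
  assumes S: "finite S" and m2: "card S \<ge> 2" and sym: "\<And>u w. h u w = h w u"
  shows "(real (card S) - 1) * (\<Sum>u\<in>S. ((\<Sum>w\<in>S-{u}. h u w) / (real (card S) - 1)
            - (\<Sum>u'\<in>S. (\<Sum>w\<in>S-{u'}. h u' w) / (real (card S) - 1)) / card S)\<^sup>2)
     \<le> (\<Sum>u\<in>S. \<Sum>w\<in>S-{u}. (h u w - (\<Sum>w'\<in>S-{u}. h u w') / (real (card S) - 1))\<^sup>2)"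
proof -
  define m where "m = real (card S)"
  have mge: "m \<ge> 2" unfolding m_def using m2 by simp
  define H where "H = (\<lambda>u. (\<Sum>w\<in>S-{u}. h u w) / (m - 1))"
  define M where "M = (\<Sum>u\<in>S. H u) / m"
  define a where "a = (\<lambda>u. H u - M)"
  define e where "e = (\<lambda>u w. h u w - H u)"
  have sumH: "(\<Sum>w\<in>S-{u}. h u w) = (m - 1) * H u" for u
    unfolding H_def using mge by simp
  have sa: "(\<Sum>u\<in>S. a u) = 0"
    unfolding a_def M_def using mge by (simp add: sum_subtractf m_def)
  have swap: "(\<Sum>u\<in>S. \<Sum>w\<in>S-{u}. G u w) = (\<Sum>w\<in>S. \<Sum>u\<in>S-{w}. G u w)" for G :: "'a \<Rightarrow> 'a \<Rightarrow> real"
  proof -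
    have "(\<Sum>u\<in>S. \<Sum>w\<in>S-{u}. G u w) = (\<Sum>u\<in>S. \<Sum>w\<in>{w\<in>S. u \<noteq> w}. G u w)"
      by (intro sum.cong) auto
    also have "\<dots> = (\<Sum>w\<in>S. \<Sum>u\<in>{u\<in>S. u \<noteq> w}. G u w)"
      by (rule sum.swap_restrict[OF S S])
    also have "\<dots> = (\<Sum>w\<in>S. \<Sum>u\<in>S-{w}. G u w)"
      by (intro sum.cong) auto
    finally show ?thesis .
  qed
  have X1: "(\<Sum>u\<in>S. \<Sum>w\<in>S-{u}. h u w * a w) = (m - 1) * (\<Sum>w\<in>S. a w * H w)"
  proof -
    have "(\<Sum>u\<in>S. \<Sum>w\<in>S-{u}. h u w * a w) = (\<Sum>w\<in>S. \<Sum>u\<in>S-{w}. h u w * a w)" by (rule swap)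
    also have "\<dots> = (\<Sum>w\<in>S. a w * (\<Sum>u\<in>S-{w}. h w u))"
      by (simp add: sum_distrib_left sym mult.commute)
    also have "\<dots> = (\<Sum>w\<in>S. a w * ((m - 1) * H w))" by (simp add: sumH)
    finally show ?thesis by (simp add: sum_distrib_left algebra_simps)
  qed
  have X2: "(\<Sum>u\<in>S. \<Sum>w\<in>S-{u}. H u * a w) = - (\<Sum>u\<in>S. H u * a u)"
  proof -
    have "(\<Sum>u\<in>S. \<Sum>w\<in>S-{u}. H u * a w) = (\<Sum>u\<in>S. H u * ((\<Sum>w\<in>S. a w) - a u))"
      using S by (intro sum.cong) (auto simp: sum_distrib_left[symmetric] sum_diff1)
    thus ?thesis using sa by (simp add: sum_negf)
  qed
  have HA: "(\<Sum>u\<in>S. H u * a u) = (\<Sum>u\<in>S. (a u)\<^sup>2)"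
  proof -
    have "(\<Sum>u\<in>S. H u * a u) = (\<Sum>u\<in>S. (a u)\<^sup>2 + M * a u)"
      unfolding a_def by (intro sum.cong) (auto simp: power2_eq_square algebra_simps)
    thus ?thesis using sa by (simp add: sum.distrib sum_distrib_left[symmetric])
  qed
  have X: "(\<Sum>u\<in>S. \<Sum>w\<in>S-{u}. e u w * a w) = m * (\<Sum>u\<in>S. (a u)\<^sup>2)"
  proof -
    have "(\<Sum>u\<in>S. \<Sum>w\<in>S-{u}. e u w * a w) = (\<Sum>u\<in>S. \<Sum>w\<in>S-{u}. h u w * a w) - (\<Sum>u\<in>S. \<Sum>w\<in>S-{u}. H u * a w)"
      unfolding e_def by (simp add: sum_subtractf left_diff_distrib)
    also have "\<dots> = (m - 1) * (\<Sum>u\<in>S. (a u)\<^sup>2) + (\<Sum>u\<in>S. (a u)\<^sup>2)"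
      unfolding X1 X2 using HA by (simp add: mult.commute)
    finally show ?thesis by (simp add: algebra_simps)
  qed
  have Y: "(\<Sum>u\<in>S. \<Sum>w\<in>S-{u}. (a w)\<^sup>2) = (m - 1) * (\<Sum>u\<in>S. (a u)\<^sup>2)"
  proof -
    have "(\<Sum>u\<in>S. \<Sum>w\<in>S-{u}. (a w)\<^sup>2) = (\<Sum>u\<in>S. (\<Sum>w\<in>S. (a w)\<^sup>2) - (a u)\<^sup>2)"
      using S by (intro sum.cong) (auto simp: sum_diff1)
    also have "\<dots> = m * (\<Sum>w\<in>S. (a w)\<^sup>2) - (\<Sum>u\<in>S. (a u)\<^sup>2)"
      unfolding m_def by (simp add: sum_subtractf)
    finally show ?thesis by (simp add: algebra_simps)
  qed
  have Z: "(\<Sum>u\<in>S. \<Sum>w\<in>S-{u}. (e u w - a w)\<^sup>2)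
      = (\<Sum>u\<in>S. \<Sum>w\<in>S-{u}. (e u w)\<^sup>2) - 2 * (\<Sum>u\<in>S. \<Sum>w\<in>S-{u}. e u w * a w) + (\<Sum>u\<in>S. \<Sum>w\<in>S-{u}. (a w)\<^sup>2)"
  proof -
    have "(\<Sum>u\<in>S. \<Sum>w\<in>S-{u}. (e u w - a w)\<^sup>2) = (\<Sum>u\<in>S. \<Sum>w\<in>S-{u}. (e u w)\<^sup>2 - 2 * (e u w * a w) + (a w)\<^sup>2)"
      by (intro sum.cong) (auto simp: power2_eq_square algebra_simps)
    thus ?thesis by (simp add: sum.distrib sum_subtractf sum_distrib_left)
  qed
  have "0 \<le> (\<Sum>u\<in>S. \<Sum>w\<in>S-{u}. (e u w - a w)\<^sup>2)" by (intro sum_nonneg) auto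
  hence main: "(m + 1) * (\<Sum>u\<in>S. (a u)\<^sup>2) \<le> (\<Sum>u\<in>S. \<Sum>w\<in>S-{u}. (e u w)\<^sup>2)"
    unfolding Z X Y by (simp add: algebra_simps)
  have "(m - 1) * (\<Sum>u\<in>S. (a u)\<^sup>2) \<le> (m + 1) * (\<Sum>u\<in>S. (a u)\<^sup>2)"
    by (intro mult_right_mono) (auto intro: sum_nonneg)
  hence "(m - 1) * (\<Sum>u\<in>S. (a u)\<^sup>2) \<le> (\<Sum>u\<in>S. \<Sum>w\<in>S-{u}. (e u w)\<^sup>2)" using main by linarith
  thus ?thesis unfolding a_def e_def H_def M_def m_def .
qed

definition avgk :: "'a set \<Rightarrow> nat \<Rightarrow> ('a set \<Rightarrow> real) \<Rightarrow> real" where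
  "avgk T k f = sum f (ksub T k) / card (ksub T k)"

definition mloc :: "'a set \<Rightarrow> 'a set \<Rightarrow> ('a set \<Rightarrow> real) \<Rightarrow> real" where
  "mloc T s f = (\<Sum>w\<in>T-s. f (insert w s)) / card (T - s)"

definition ER :: "'a set \<Rightarrow> nat \<Rightarrow> ('a set \<Rightarrow> real) \<Rightarrow> real" where
  "ER T k f = (\<Sum>s\<in>ksub T (k-1). \<Sum>w\<in>T-s. (f (insert w s) - mloc T s f)\<^sup>2)"

lemma ksub_card_diff: "finite T \<Longrightarrow> s \<in> ksub T k \<Longrightarrow> card (T - s) = card T - k"
  by (auto simp: ksub_mem card_Diff_subset finite_subset)

lemma ksub0: "finite T \<Longrightarrow> ksub T 0 = {{}}"
  unfolding ksub_def by (auto dest: finite_subset)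

lemma johnson:
  fixes T :: "'a set"
  assumes T: "finite T"
  shows "1 \<le> k \<Longrightarrow> k \<le> card T \<Longrightarrow> (\<Sum>x\<in>ksub T k. (f x - avgk T k f)\<^sup>2) \<le> ER T k f"
proof (induction k arbitrary: f)
  case 0 thus ?case by simp
next
  case (Suc k f)
  define n where "n = card T"
  show ?case
  proof (cases "k = 0")
    case True
    have re: "(\<Sum>x\<in>ksub T (Suc 0). G x) = (\<Sum>w\<in>T. G {w})" for G :: "'a set \<Rightarrow> real"
      using sum_add_vertex[OF T, of "{}" G] by simp
    have ck: "card (ksub T (Suc 0)) = card T" using card_ksub[OF T] by simp
    have "avgk T (Suc 0) f = mloc T {} f"
      unfolding avgk_def mloc_def re ck by simp
    hence "(\<Sum>x\<in>ksub T (Suc 0). (f x - avgk T (Suc 0) f)\<^sup>2) = ER T (Suc 0) f"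
      unfolding ER_def re using ksub0[OF T] by simp
    thus ?thesis using True by simp
  next
    case False
    hence k1: "1 \<le> k" by simp
    have kn: "Suc k \<le> n" using Suc.prems n_def by simp
    define g where "g = avgk T (Suc k) f"
    define F where "F = (\<lambda>s. mloc T s f)"
    define LHS where "LHS = (\<Sum>x\<in>ksub T (Suc k). (f x - g)\<^sup>2)"
    have a: "real (Suc k) * LHS = (\<Sum>s\<in>ksub T k. \<Sum>w\<in>T-s. (f (insert w s) - g)\<^sup>2)"
    proof -
      have "(\<Sum>x\<in>ksub T (Suc k). \<Sum>v\<in>x. (\<lambda>x u. (f x - g)\<^sup>2) x (x - {v}))
          = (\<Sum>s\<in>ksub T (Suc k - 1). \<Sum>w\<in>T-s. (\<lambda>x u. (f x - g)\<^sup>2) (insert w s) s)"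
        by (rule DCT[OF T]) simp
      moreover have "(\<Sum>x\<in>ksub T (Suc k). \<Sum>v\<in>x. (\<lambda>x u. (f x - g)\<^sup>2) x (x - {v})) = real (Suc k) * LHS"
        unfolding LHS_def sum_distrib_left by (intro sum.cong) (auto simp: ksub_mem)
      ultimately show ?thesis by simp
    qed
    have b: "(\<Sum>s\<in>ksub T k. \<Sum>w\<in>T-s. (f (insert w s) - g)\<^sup>2)
        = ER T (Suc k) f + real (n - k) * (\<Sum>s\<in>ksub T k. (F s - g)\<^sup>2)"
    proof -
      have "(\<Sum>w\<in>T-s. (f (insert w s) - g)\<^sup>2)
          = (\<Sum>w\<in>T-s. (f (insert w s) - F s)\<^sup>2) + real (n - k) * (F s - g)\<^sup>2"
        if s: "s \<in> ksub T k" for s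
      proof -
        have "card (T - s) = n - k" using ksub_card_diff[OF T s] n_def by simp
        thus ?thesis using VD[of "T - s" "\<lambda>w. f (insert w s)" g] T
          unfolding F_def mloc_def by simp
      qed
      thus ?thesis unfolding ER_def by (simp add: sum.distrib sum_distrib_left F_def)
    qed
    have c: "avgk T k F = g"
    proof -
      have nk: "n - k > 0" using kn by simp
      have "(\<Sum>s\<in>ksub T k. F s) = (\<Sum>s\<in>ksub T k. \<Sum>w\<in>T-s. f (insert w s)) / real (n - k)"
        unfolding F_def mloc_def sum_divide_distrib
        by (intro sum.cong) (auto simp: ksub_card_diff[OF T] n_def)
      also have "(\<Sum>s\<in>ksub T k. \<Sum>w\<in>T-s. f (insert w s)) = (\<Sum>x\<in>ksub T (Suc k). \<Sum>v\<in>x. f x)"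
        using DCT[OF T, of "Suc k" "\<lambda>x u. f x"] by simp
      also have "\<dots> = real (Suc k) * sum f (ksub T (Suc k))"
        unfolding sum_distrib_left by (intro sum.cong) (auto simp: ksub_mem)
      finally have sF: "sum F (ksub T k) = real (Suc k) * sum f (ksub T (Suc k)) / real (n - k)" .
      have bin: "real (Suc k) * real (n choose Suc k) = real (n - k) * real (n choose k)"
      proof -
        have "Suc k * (n choose Suc k) = n * ((n - 1) choose k)"
          using times_binomial_minus1_eq[of "Suc k" n] by simp
        also have "\<dots> = (n - k) * (n choose k)" using binomial_absorb_comp[of n k] by simp
        finally show ?thesis by (metis of_nat_mult)
      qed
      have pos1: "real (n choose k) > 0" "real (n choose Suc k) > 0" using kn by auto
      have "avgk T k F = (real (Suc k) * sum f (ksub T (Suc k)) / real (n - k)) / real (n choose k)"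
        unfolding avgk_def sF card_ksub[OF T] n_def[symmetric] ..
      also have "\<dots> = sum f (ksub T (Suc k)) / real (n choose Suc k)"
      proof -
        define A where "A = real (Suc k)"
        define B where "B = real (n - k)"
        define C1 where "C1 = real (n choose k)"
        define C2 where "C2 = real (n choose Suc k)"
        define Sf where "Sf = sum f (ksub T (Suc k))"
        have h1: "A * C2 = B * C1" unfolding A_def B_def C1_def C2_def by (rule bin)
        have h2: "B > 0" unfolding B_def using nk by simp
        have h3: "C1 > 0" "C2 > 0" unfolding C1_def C2_def using pos1 by auto
        from h1 h2 h3 have "(A * Sf / B) / C1 = Sf / C2" by (simp add: field_simps)
        thus ?thesis unfolding A_def B_def C1_def C2_def Sf_def .
      qed
      finally show ?thesis unfolding g_def avgk_def card_ksub[OF T] n_def .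
    qed
    have d: "(\<Sum>s\<in>ksub T k. (F s - g)\<^sup>2) \<le> ER T k F"
      using Suc.IH[of F] k1 kn n_def c by simp
    have e: "real (n - k) * ER T k F
        \<le> (\<Sum>r\<in>ksub T (k-1). \<Sum>u\<in>T-r. \<Sum>w\<in>T - insert u r. (f (insert w (insert u r)) - F (insert u r))\<^sup>2)"
    proof -
      have per: "real (n - k) * (\<Sum>u\<in>T-r. (F (insert u r) - mloc T r F)\<^sup>2)
          \<le> (\<Sum>u\<in>T-r. \<Sum>w\<in>T - insert u r. (f (insert w (insert u r)) - F (insert u r))\<^sup>2)"
        if r: "r \<in> ksub T (k-1)" for r
      proof -
        define S where "S = T - r"
        define h where "h = (\<lambda>u w. f (insert w (insert u r)))"
        have fS: "finite S" unfolding S_def using T by simp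
        have cS: "card S = n - k + 1" unfolding S_def using ksub_card_diff[OF T r] n_def k1 kn by simp
        have cS2: "card S \<ge> 2" using cS kn k1 by simp
        have rcS: "real (card S) - 1 = real (n - k)" using cS by simp
        have hs: "\<And>u w. h u w = h w u" unfolding h_def by (simp add: insert_commute)
        have Su: "T - insert u r = S - {u}" for u unfolding S_def by auto
        have cSu: "u \<in> S \<Longrightarrow> real (card (S - {u})) = real (card S) - 1" for u
          using fS cS2 by (simp add: card_Diff_singleton of_nat_diff)
        have Fu: "F (insert u r) = (\<Sum>w\<in>S-{u}. h u w) / (real (card S) - 1)" if u: "u \<in> S" for u
          unfolding F_def mloc_def Su h_def using cSu[OF u] by simp
        have M: "mloc T r F = (\<Sum>u'\<in>S. (\<Sum>w\<in>S-{u'}. h u' w) / (real (card S) - 1)) / card S"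
          unfolding mloc_def S_def[symmetric] by (simp add: Fu)
        have L: "real (n - k) * (\<Sum>u\<in>T-r. (F (insert u r) - mloc T r F)\<^sup>2)
            = (real (card S) - 1) * (\<Sum>u\<in>S. ((\<Sum>w\<in>S-{u}. h u w) / (real (card S) - 1)
                - (\<Sum>u'\<in>S. (\<Sum>w\<in>S-{u'}. h u' w) / (real (card S) - 1)) / card S)\<^sup>2)"
          unfolding M S_def[symmetric] by (simp add: Fu rcS)
        have R: "(\<Sum>u\<in>T-r. \<Sum>w\<in>T - insert u r. (f (insert w (insert u r)) - F (insert u r))\<^sup>2)
            = (\<Sum>u\<in>S. \<Sum>w\<in>S-{u}. (h u w - (\<Sum>w'\<in>S-{u}. h u w') / (real (card S) - 1))\<^sup>2)"
          unfolding Su S_def[symmetric] by (intro sum.cong) (auto simp: Fu h_def)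
        show ?thesis unfolding L R by (rule pair_lemma[OF fS cS2 hs])
      qed
      have "real (n - k) * ER T k F = (\<Sum>r\<in>ksub T (k-1). real (n - k) * (\<Sum>u\<in>T-r. (F (insert u r) - mloc T r F)\<^sup>2))"
        unfolding ER_def by (simp add: sum_distrib_left)
      also have "\<dots> \<le> (\<Sum>r\<in>ksub T (k-1). \<Sum>u\<in>T-r. \<Sum>w\<in>T - insert u r. (f (insert w (insert u r)) - F (insert u r))\<^sup>2)"
        by (intro sum_mono per)
      finally show ?thesis .
    qed
    have f: "(\<Sum>r\<in>ksub T (k-1). \<Sum>u\<in>T-r. \<Sum>w\<in>T - insert u r. (f (insert w (insert u r)) - F (insert u r))\<^sup>2)
        = real k * ER T (Suc k) f"
    proof -
      define G where "G = (\<lambda>s. \<Sum>w\<in>T - s. (f (insert w s) - F s)\<^sup>2)"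
      have "(\<Sum>s\<in>ksub T k. \<Sum>v\<in>s. (\<lambda>s u. G s) s (s - {v})) = (\<Sum>r\<in>ksub T (k-1). \<Sum>u\<in>T-r. (\<lambda>s u. G s) (insert u r) r)"
        by (rule DCT[OF T k1])
      moreover have "(\<Sum>s\<in>ksub T k. \<Sum>v\<in>s. (\<lambda>s u. G s) s (s - {v})) = (\<Sum>s\<in>ksub T k. real k * G s)"
        by (intro sum.cong) (auto simp: ksub_mem)
      moreover have "(\<Sum>s\<in>ksub T k. real k * G s) = real k * ER T (Suc k) f"
        unfolding ER_def G_def F_def by (simp add: sum_distrib_left)
      ultimately show ?thesis unfolding G_def by simp
    qed
    have "real (Suc k) * LHS \<le> ER T (Suc k) f + real k * ER T (Suc k) f"
    proof -
      have "real (Suc k) * LHS = ER T (Suc k) f + real (n - k) * (\<Sum>s\<in>ksub T k. (F s - g)\<^sup>2)"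
        using a b by simp
      also have "\<dots> \<le> ER T (Suc k) f + real (n - k) * ER T k F"
        using d by (intro add_left_mono mult_left_mono) auto
      also have "\<dots> \<le> ER T (Suc k) f + real k * ER T (Suc k) f"
        using e f by simp
      finally show ?thesis .
    qed
    hence "real (Suc k) * LHS \<le> real (Suc k) * ER T (Suc k) f" by (simp add: algebra_simps)
    hence "LHS \<le> ER T (Suc k) f" by simp
    thus ?thesis unfolding LHS_def g_def .
  qed
qed

lemma sum_sq_le_card: fixes y :: "'a \<Rightarrow> real" assumes "finite S"
  shows "(\<Sum>s\<in>S. y s)\<^sup>2 \<le> card S * (\<Sum>s\<in>S. (y s)\<^sup>2)"
proof -
  have "(\<Sum>s\<in>S. y s * 1)\<^sup>2 \<le> (\<Sum>s\<in>S. (y s)\<^sup>2) * (\<Sum>s\<in>S. 1\<^sup>2)"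
    by (rule Cauchy_Schwarz_ineq_sum)
  thus ?thesis by (simp add: mult.commute)
qed

lemma split_vertex:
  assumes t: "finite t" and v: "v \<in> t" and k: "k \<ge> 1"
  shows "(\<Sum>x\<in>ksub t k. f x) = (\<Sum>x\<in>ksub (t - {v}) k. f x) + (\<Sum>s\<in>ksub (t - {v}) (k-1). (f (insert v s) :: real))"
proof -
  have eq: "ksub t k = ksub (t - {v}) k \<union> (insert v) ` ksub (t - {v}) (k-1)"
  proof
    show "ksub t k \<subseteq> ksub (t - {v}) k \<union> (insert v) ` ksub (t - {v}) (k-1)"
    proof
      fix x assume x: "x \<in> ksub t k"
      hence xt: "x \<subseteq> t" "card x = k" by (auto simp: ksub_mem)
      show "x \<in> ksub (t - {v}) k \<union> (insert v) ` ksub (t - {v}) (k-1)"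
      proof (cases "v \<in> x")
        case True
        have fx: "finite x" using xt t finite_subset by blast
        have "x - {v} \<in> ksub (t - {v}) (k-1)" using xt True fx by (auto simp: ksub_mem)
        moreover have "x = insert v (x - {v})" using True by auto
        ultimately show ?thesis by blast
      next
        case False thus ?thesis using xt by (auto simp: ksub_mem)
      qed
    qed
    show "ksub (t - {v}) k \<union> (insert v) ` ksub (t - {v}) (k-1) \<subseteq> ksub t k"
    proof -
      have "insert v s \<in> ksub t k" if "s \<in> ksub (t - {v}) (k-1)" for s
      proof -
        have s: "s \<subseteq> t - {v}" "card s = k - 1" using that by (auto simp: ksub_mem)
        have fs: "finite s" using s t finite_subset by blast
        have "v \<notin> s" using s by auto
        hence "card (insert v s) = k" using s fs k by simp
        thus ?thesis using s v by (auto simp: ksub_mem)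
      qed
      thus ?thesis using v by (auto simp: ksub_mem)
    qed
  qed
  have disj: "ksub (t - {v}) k \<inter> (insert v) ` ksub (t - {v}) (k-1) = {}" by (auto simp: ksub_mem)
  have inj: "inj_on (insert v) (ksub (t - {v}) (k-1))"
  proof (rule inj_onI)
    fix x y assume xy: "x \<in> ksub (t - {v}) (k-1)" "y \<in> ksub (t - {v}) (k-1)" "insert v x = insert v y"
    hence "v \<notin> x" "v \<notin> y" by (auto simp: ksub_mem)
    thus "x = y" using xy(3) by (metis Diff_insert_absorb)
  qed
  have "(\<Sum>x\<in>ksub t k. f x) = (\<Sum>x\<in>ksub (t - {v}) k. f x) + (\<Sum>x\<in>(insert v) ` ksub (t - {v}) (k-1). f x)"
    unfolding eq using t disj by (intro sum.union_disjoint) auto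
  also have "(\<Sum>x\<in>(insert v) ` ksub (t - {v}) (k-1). f x) = (\<Sum>s\<in>ksub (t - {v}) (k-1). f (insert v s))"
    by (subst sum.reindex[OF inj]) simp
  finally show ?thesis .
qed

lemma sum_subset_if: "finite B \<Longrightarrow> A \<subseteq> B \<Longrightarrow> sum g A = (\<Sum>x\<in>B. if x \<in> A then g x else (0::real))"
  by (simp add: sum.If_cases Int_absorb1 finite_subset)

lemma AL:
  fixes a F :: "'a \<Rightarrow> real"
  assumes A: "finite A" and N: "sum a A \<noteq> 0"
  shows "(\<Sum>w\<in>A. a w * (\<Sum>z\<in>A. a z / sum a A * (max (F w - F z) 0)\<^sup>2))
       = (\<Sum>w\<in>A. a w * (F w - (\<Sum>z\<in>A. a z / sum a A * F z))\<^sup>2)"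
proof -
  define N where "N = sum a A"
  define S where "S = (\<Sum>w\<in>A. \<Sum>z\<in>A. a w * a z * (max (F w - F z) 0)\<^sup>2)"
  define P where "P = (\<Sum>w\<in>A. a w * (F w)\<^sup>2)"
  define L where "L = (\<Sum>w\<in>A. a w * F w)"
  have S2: "S = (\<Sum>w\<in>A. \<Sum>z\<in>A. a w * a z * (max (F z - F w) 0)\<^sup>2)"
    unfolding S_def by (subst sum.swap) (simp add: mult.commute)
  have mx: "(max x 0)\<^sup>2 + (max (- x) 0)\<^sup>2 = x\<^sup>2" for x :: real
    by (cases "x \<ge> 0") (auto simp: max_def power2_eq_square)
  have "2 * S = (\<Sum>w\<in>A. \<Sum>z\<in>A. a w * a z * (F w - F z)\<^sup>2)"
  proof -
    have "2 * S = S + (\<Sum>w\<in>A. \<Sum>z\<in>A. a w * a z * (max (F z - F w) 0)\<^sup>2)" using S2 by simp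
    also have "\<dots> = (\<Sum>w\<in>A. \<Sum>z\<in>A. a w * a z * ((max (F w - F z) 0)\<^sup>2 + (max (- (F w - F z)) 0)\<^sup>2))"
      unfolding S_def by (simp add: sum.distrib[symmetric] distrib_left)
    also have "\<dots> = (\<Sum>w\<in>A. \<Sum>z\<in>A. a w * a z * (F w - F z)\<^sup>2)"
      by (simp only: mx)
    finally show ?thesis .
  qed
  also have "\<dots> = (\<Sum>w\<in>A. \<Sum>z\<in>A. a z * (a w * (F w)\<^sup>2) + a w * (a z * (F z)\<^sup>2) - 2 * ((a w * F w) * (a z * F z)))"
    by (intro sum.cong) (auto simp: power2_eq_square algebra_simps)
  also have "\<dots> = (\<Sum>w\<in>A. \<Sum>z\<in>A. a z * (a w * (F w)\<^sup>2)) + (\<Sum>w\<in>A. \<Sum>z\<in>A. a w * (a z * (F z)\<^sup>2))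
      - 2 * (\<Sum>w\<in>A. \<Sum>z\<in>A. (a w * F w) * (a z * F z))"
    by (simp add: sum.distrib sum_subtractf sum_distrib_left)
  also have "(\<Sum>w\<in>A. \<Sum>z\<in>A. a z * (a w * (F w)\<^sup>2)) = N * P"
    unfolding N_def P_def by (simp add: sum_distrib_left sum_distrib_right)
  also have "(\<Sum>w\<in>A. \<Sum>z\<in>A. a w * (a z * (F z)\<^sup>2)) = N * P"
  proof -
    have "(\<Sum>w\<in>A. \<Sum>z\<in>A. a w * (a z * (F z)\<^sup>2)) = (\<Sum>w\<in>A. a w * P)"
      unfolding P_def by (simp add: sum_distrib_left)
    also have "\<dots> = N * P" unfolding N_def by (simp add: sum_distrib_right)
    finally show ?thesis .
  qed
  also have "(\<Sum>w\<in>A. \<Sum>z\<in>A. (a w * F w) * (a z * F z)) = L\<^sup>2"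
  proof -
    have "(\<Sum>w\<in>A. \<Sum>z\<in>A. (a w * F w) * (a z * F z)) = (\<Sum>w\<in>A. (a w * F w) * L)"
      unfolding L_def by (simp add: sum_distrib_left)
    also have "\<dots> = L * L" unfolding L_def by (simp add: sum_distrib_right)
    finally show ?thesis by (simp add: power2_eq_square)
  qed
  finally have S: "S = N * P - L\<^sup>2" by simp
  have Nn: "N \<noteq> 0" using N unfolding N_def .
  have lhs: "(\<Sum>w\<in>A. a w * (\<Sum>z\<in>A. a z / sum a A * (max (F w - F z) 0)\<^sup>2)) = S / N"
    unfolding S_def N_def[symmetric] by (simp add: sum_distrib_left sum_divide_distrib mult.assoc)
  have m: "(\<Sum>z\<in>A. a z / sum a A * F z) = L / N"
    unfolding L_def N_def[symmetric] by (simp add: sum_divide_distrib)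
  have "(\<Sum>w\<in>A. a w * (F w - L / N)\<^sup>2) = (\<Sum>w\<in>A. a w * (F w)\<^sup>2 - 2 * (L / N) * (a w * F w) + (L / N)\<^sup>2 * a w)"
    by (intro sum.cong) (auto simp: power2_eq_square algebra_simps)
  also have "\<dots> = P - 2 * (L / N) * L + (L / N)\<^sup>2 * N"
    unfolding P_def L_def N_def by (simp add: sum.distrib sum_subtractf sum_distrib_left)
  also have "\<dots> = S / N" using Nn unfolding S by (simp add: field_simps power2_eq_square)
  finally show ?thesis unfolding lhs m by simp
qed

context cplx
begin

lemma faces_eq: "faces Xd k = (\<Union>t\<in>Xd. ksub t k)"
  unfolding faces_def ksub_def by auto

lemma fin_faces: "finite (faces Xd k)"
  unfolding faces_eq using fin unif by auto

lemma swap_faces: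
  "(\<Sum>t\<in>Xd. p t * (\<Sum>x\<in>ksub t k. X x t)) = (\<Sum>x\<in>faces Xd k. \<Sum>t\<in>Xd. if x \<subseteq> t then p t * X x t else 0)"
proof -
  have "(\<Sum>t\<in>Xd. p t * (\<Sum>x\<in>ksub t k. X x t)) = (\<Sum>t\<in>Xd. \<Sum>x\<in>faces Xd k. if x \<subseteq> t then p t * X x t else 0)"
  proof (rule sum.cong[OF refl])
    fix t assume t: "t \<in> Xd"
    have sub: "ksub t k \<subseteq> faces Xd k" unfolding faces_eq using t by auto
    have "p t * (\<Sum>x\<in>ksub t k. X x t) = (\<Sum>x\<in>faces Xd k. if x \<in> ksub t k then p t * X x t else 0)"
      unfolding sum_distrib_left by (rule sum_subset_if[OF fin_faces sub])
    also have "\<dots> = (\<Sum>x\<in>faces Xd k. if x \<subseteq> t then p t * X x t else 0)"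
      by (intro sum.cong) (auto simp: ksub_mem faces_def)
    finally show "p t * (\<Sum>x\<in>ksub t k. X x t) = (\<Sum>x\<in>faces Xd k. if x \<subseteq> t then p t * X x t else 0)" .
  qed
  also have "\<dots> = (\<Sum>x\<in>faces Xd k. \<Sum>t\<in>Xd. if x \<subseteq> t then p t * X x t else 0)"
    by (rule sum.swap)
  finally show ?thesis .
qed

lemma expec_t: "expec Xd p d k h = (\<Sum>t\<in>Xd. p t * (\<Sum>x\<in>ksub t k. h x)) / real (d choose k)"
proof -
  have "expec Xd p d k h = (\<Sum>x\<in>faces Xd k. (\<Sum>t\<in>Xd. if x \<subseteq> t then p t * h x else 0)) / real (d choose k)"
    unfolding expec_def pi_face_def sum_divide_distrib
    by (intro sum.cong) (auto simp: sum_distrib_right intro!: sum.cong)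
  also have "(\<Sum>x\<in>faces Xd k. (\<Sum>t\<in>Xd. if x \<subseteq> t then p t * h x else 0)) = (\<Sum>t\<in>Xd. p t * (\<Sum>x\<in>ksub t k. h x))"
    using swap_faces[where k=k and X="\<lambda>x t. h x"] by simp
  finally show ?thesis .
qed

lemma GS_inner:
  assumes t: "t \<in> Xd"
  shows "(if s \<subseteq> t then p t * (\<Sum>w\<in>t-s. \<Phi> w) else 0)
      = (\<Sum>w\<in>\<Union>Xd - s. if insert w s \<subseteq> t then p t * \<Phi> w else (0::real))"
proof (cases "s \<subseteq> t")
  case True
  have finV: "finite (\<Union>Xd - s)" using fin unif by auto
  have sub: "t - s \<subseteq> \<Union>Xd - s" using t by auto
  have "p t * (\<Sum>w\<in>t-s. \<Phi> w) = (\<Sum>w\<in>\<Union>Xd - s. if w \<in> t - s then p t * \<Phi> w else 0)"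
    unfolding sum_distrib_left by (rule sum_subset_if[OF finV sub])
  also have "\<dots> = (\<Sum>w\<in>\<Union>Xd - s. if insert w s \<subseteq> t then p t * \<Phi> w else 0)"
    using True by (intro sum.cong) auto
  finally show ?thesis using True by simp
next
  case False thus ?thesis by (auto intro!: sum.neutral)
qed

lemma GS:
  "(\<Sum>t\<in>Xd. p t * (\<Sum>s\<in>ksub t j. \<Sum>w\<in>t-s. \<Phi> s w))
     = (\<Sum>s\<in>faces Xd j. \<Sum>w\<in>\<Union>Xd - s. W (insert w s) * \<Phi> s w)"
proof -
  have "(\<Sum>t\<in>Xd. p t * (\<Sum>s\<in>ksub t j. \<Sum>w\<in>t-s. \<Phi> s w))
      = (\<Sum>s\<in>faces Xd j. \<Sum>t\<in>Xd. if s \<subseteq> t then p t * (\<Sum>w\<in>t-s. \<Phi> s w) else 0)"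
    by (rule swap_faces)
  also have "\<dots> = (\<Sum>s\<in>faces Xd j. \<Sum>w\<in>\<Union>Xd - s. W (insert w s) * \<Phi> s w)"
  proof (rule sum.cong[OF refl])
    fix s assume s: "s \<in> faces Xd j"
    have finV: "finite (\<Union>Xd - s)" using fin unif by auto
    have "(\<Sum>t\<in>Xd. if s \<subseteq> t then p t * (\<Sum>w\<in>t-s. \<Phi> s w) else 0)
        = (\<Sum>t\<in>Xd. \<Sum>w\<in>\<Union>Xd - s. if insert w s \<subseteq> t then p t * \<Phi> s w else 0)"
    proof (rule sum.cong[OF refl])
      fix t assume t: "t \<in> Xd"
      show "(if s \<subseteq> t then p t * (\<Sum>w\<in>t-s. \<Phi> s w) else 0)
          = (\<Sum>w\<in>\<Union>Xd - s. if insert w s \<subseteq> t then p t * \<Phi> s w else 0)"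
      proof (cases "s \<subseteq> t")
        case True
        have sub: "t - s \<subseteq> \<Union>Xd - s" using t by auto
        have "p t * (\<Sum>w\<in>t-s. \<Phi> s w) = (\<Sum>w\<in>\<Union>Xd - s. if w \<in> t - s then p t * \<Phi> s w else 0)"
          unfolding sum_distrib_left by (rule sum_subset_if[OF finV sub])
        also have "\<dots> = (\<Sum>w\<in>\<Union>Xd - s. if insert w s \<subseteq> t then p t * \<Phi> s w else 0)"
          using True by (intro sum.cong) auto
        finally show ?thesis using True by simp
      next
        case False thus ?thesis by (auto intro!: sum.neutral)
      qed
    qed
    also have "\<dots> = (\<Sum>w\<in>\<Union>Xd - s. \<Sum>t\<in>Xd. if insert w s \<subseteq> t then p t * \<Phi> s w else 0)"
      by (rule sum.swap)
    also have "\<dots> = (\<Sum>w\<in>\<Union>Xd - s. W (insert w s) * \<Phi> s w)"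
      unfolding W_def sum_distrib_right by (intro sum.cong) auto
    finally show "(\<Sum>t\<in>Xd. if s \<subseteq> t then p t * (\<Sum>w\<in>t-s. \<Phi> s w) else 0)
        = (\<Sum>w\<in>\<Union>Xd - s. W (insert w s) * \<Phi> s w)" .
  qed
  finally show ?thesis .
qed

lemma sumN:
  assumes s: "s \<in> faces Xd j"
  shows "(\<Sum>w\<in>\<Union>Xd - s. W (insert w s)) = W s * real (d - j)"
proof -
  have cs: "card s = j" using s unfolding faces_def by auto
  have "(\<Sum>w\<in>\<Union>Xd - s. W (insert w s)) = (\<Sum>w\<in>\<Union>Xd - s. \<Sum>t\<in>Xd. if insert w s \<subseteq> t then p t * 1 else 0)"
    unfolding W_def by (intro sum.cong) auto
  also have "\<dots> = (\<Sum>t\<in>Xd. \<Sum>w\<in>\<Union>Xd - s. if insert w s \<subseteq> t then p t * 1 else 0)"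
    by (rule sum.swap)
  also have "\<dots> = (\<Sum>t\<in>Xd. if s \<subseteq> t then p t * (\<Sum>w\<in>t-s. 1) else 0)"
    by (intro sum.cong refl GS_inner[symmetric])
  also have "\<dots> = (\<Sum>t\<in>Xd. if s \<subseteq> t then p t * real (d - j) else 0)"
  proof (rule sum.cong[OF refl])
    fix t assume t: "t \<in> Xd"
    show "(if s \<subseteq> t then p t * (\<Sum>w\<in>t-s. 1) else 0) = (if s \<subseteq> t then p t * real (d - j) else 0)"
      using cs unif[OF t] by (auto simp: card_Diff_subset finite_subset)
  qed
  also have "\<dots> = W s * real (d - j)" unfolding W_def sum_distrib_right by (intro sum.cong) auto
  finally show ?thesis .
qed

end

lemma SW:
  assumes t: "finite t"
  shows "(\<Sum>v\<in>t. \<Sum>s\<in>ksub (t - {v}) j. \<Phi> v s) = (\<Sum>s\<in>ksub t j. \<Sum>w\<in>t-s. (\<Phi> w s :: real))"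
proof -
  have "(\<Sum>v\<in>t. \<Sum>s\<in>ksub (t - {v}) j. \<Phi> v s) = (\<Sum>v\<in>t. \<Sum>s\<in>{s\<in>ksub t j. v \<notin> s}. \<Phi> v s)"
    by (intro sum.cong refl) (auto simp: ksub_mem)
  also have "\<dots> = (\<Sum>s\<in>ksub t j. \<Sum>v\<in>{v\<in>t. v \<notin> s}. \<Phi> v s)"
    by (rule sum.swap_restrict) (use t in auto)
  also have "\<dots> = (\<Sum>s\<in>ksub t j. \<Sum>w\<in>t-s. \<Phi> w s)"
    by (intro sum.cong refl) auto
  finally show ?thesis .
qed

lemma binom_le: "1 \<le> k \<Longrightarrow> k \<le> d \<Longrightarrow> (d - 1) choose (k - 1) \<le> d choose k"
proof -
  assume "1 \<le> k" "k \<le> d"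
  then obtain d' k' where "d = Suc d'" "k = Suc k'" by (metis Suc_le_D le_trans Suc_le_eq less_eq_Suc_le not0_implies_Suc not_one_le_zero)
  thus ?thesis by simp
qed

context cplx
begin

definition mg :: "('v set \<Rightarrow> real) \<Rightarrow> 'v set \<Rightarrow> real" where
  "mg f s = (\<Sum>z\<in>\<Union>Xd. link_vertex_dist Xd p d s z * f (insert z s))"

definition Dk :: "nat \<Rightarrow> ('v set \<Rightarrow> real) \<Rightarrow> real" where
  "Dk k f = (\<Sum>t\<in>Xd. p t * (\<Sum>s\<in>ksub t (k-1). \<Sum>w\<in>t-s. (f (insert w s) - mg f s)\<^sup>2)) / real (d choose k)"

lemma link_eq: "link_vertex_dist Xd p d s z = (if z \<in> s then 0 else W (insert z s) / (W s * real (d - card s)))"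
  unfolding link_vertex_dist_def W_def by simp

lemma faces_W_pos: "s \<in> faces Xd j \<Longrightarrow> W s > 0"
  unfolding faces_def using W_pos by blast

lemma link_sum:
  assumes s: "s \<in> faces Xd j"
  shows "(\<Sum>z\<in>\<Union>Xd. link_vertex_dist Xd p d s z * G z)
     = (\<Sum>z\<in>\<Union>Xd - s. W (insert z s) / (\<Sum>w\<in>\<Union>Xd - s. W (insert w s)) * G z)"
proof -
  have cs: "card s = j" using s unfolding faces_def by auto
  have finV: "finite (\<Union>Xd)" using fin unif by auto
  have N: "(\<Sum>w\<in>\<Union>Xd - s. W (insert w s)) = W s * real (d - card s)" using sumN[OF s] cs by simp
  have "(\<Sum>z\<in>\<Union>Xd - s. W (insert z s) / (\<Sum>w\<in>\<Union>Xd - s. W (insert w s)) * G z)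
      = (\<Sum>z\<in>\<Union>Xd. if z \<in> \<Union>Xd - s then W (insert z s) / (\<Sum>w\<in>\<Union>Xd - s. W (insert w s)) * G z else 0)"
    by (rule sum_subset_if[OF finV]) auto
  also have "\<dots> = (\<Sum>z\<in>\<Union>Xd. link_vertex_dist Xd p d s z * G z)"
    unfolding N link_eq by (intro sum.cong) auto
  finally show ?thesis by simp
qed

lemma rhs_eq:
  assumes k: "1 \<le> k" "k \<le> d"
  shows "expec Xd p d k (\<lambda>x. \<Sum>v\<in>x. \<Sum>z\<in>\<Union>Xd.
          link_vertex_dist Xd p d (x - {v}) z * (max (f x - f (insert z (x - {v}))) 0)\<^sup>2) = Dk k f"
proof -
  define Y where "Y = (\<lambda>s w. \<Sum>z\<in>\<Union>Xd. link_vertex_dist Xd p d s z * (max (f (insert w s) - f (insert z s)) 0)\<^sup>2)"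
  define Z where "Z = (\<lambda>s w. (f (insert w s) - mg f s)\<^sup>2)"
  have step1: "(\<Sum>x\<in>ksub t k. \<Sum>v\<in>x. \<Sum>z\<in>\<Union>Xd.
          link_vertex_dist Xd p d (x - {v}) z * (max (f x - f (insert z (x - {v}))) 0)\<^sup>2)
      = (\<Sum>s\<in>ksub t (k-1). \<Sum>w\<in>t-s. Y s w)" if t: "t \<in> Xd" for t
    unfolding Y_def using DCT[of t k "\<lambda>x u. \<Sum>z\<in>\<Union>Xd. link_vertex_dist Xd p d u z * (max (f x - f (insert z u)) 0)\<^sup>2"]
      unif[OF t] k by simp
  have per: "(\<Sum>w\<in>\<Union>Xd - s. W (insert w s) * Y s w) = (\<Sum>w\<in>\<Union>Xd - s. W (insert w s) * Z s w)"
    if s: "s \<in> faces Xd (k-1)" for s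
  proof -
    have cs: "card s = k - 1" using s unfolding faces_def by auto
    have finA: "finite (\<Union>Xd - s)" using fin unif by auto
    have Npos: "(\<Sum>w\<in>\<Union>Xd - s. W (insert w s)) > 0"
      using sumN[OF s] faces_W_pos[OF s] k by simp
    have Y': "Y s w = (\<Sum>z\<in>\<Union>Xd - s. W (insert z s) / (\<Sum>w\<in>\<Union>Xd - s. W (insert w s)) * (max (f (insert w s) - f (insert z s)) 0)\<^sup>2)" for w
      unfolding Y_def by (rule link_sum[OF s])
    have Z': "mg f s = (\<Sum>z\<in>\<Union>Xd - s. W (insert z s) / (\<Sum>w\<in>\<Union>Xd - s. W (insert w s)) * f (insert z s))"
      unfolding mg_def by (rule link_sum[OF s])
    show ?thesis unfolding Y' Z_def Z'
      using AL[OF finA, of "\<lambda>w. W (insert w s)" "\<lambda>w. f (insert w s)"] Npos by simp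
  qed
  have "expec Xd p d k (\<lambda>x. \<Sum>v\<in>x. \<Sum>z\<in>\<Union>Xd.
          link_vertex_dist Xd p d (x - {v}) z * (max (f x - f (insert z (x - {v}))) 0)\<^sup>2)
      = (\<Sum>t\<in>Xd. p t * (\<Sum>s\<in>ksub t (k-1). \<Sum>w\<in>t-s. Y s w)) / real (d choose k)"
    unfolding expec_t by (simp add: step1)
  also have "(\<Sum>t\<in>Xd. p t * (\<Sum>s\<in>ksub t (k-1). \<Sum>w\<in>t-s. Y s w))
      = (\<Sum>s\<in>faces Xd (k-1). \<Sum>w\<in>\<Union>Xd - s. W (insert w s) * Y s w)" by (rule GS)
  also have "\<dots> = (\<Sum>s\<in>faces Xd (k-1). \<Sum>w\<in>\<Union>Xd - s. W (insert w s) * Z s w)"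
    by (intro sum.cong refl per)
  also have "\<dots> = (\<Sum>t\<in>Xd. p t * (\<Sum>s\<in>ksub t (k-1). \<Sum>w\<in>t-s. Z s w))" by (rule GS[symmetric])
  finally show ?thesis unfolding Dk_def Z_def .
qed

lemma var_bound:
  assumes k: "1 \<le> k" "k \<le> d" and C_pos: "C > 0"
    and gap: "lambda2_le (down_up_mat Xd p d) (1 - 1 / (C * real d))"
  shows "var Xd p d k f \<le> (C + 1) * Dk k f"
proof -
  define Ck where "Ck = real (d choose k)"
  have Ck: "Ck > 0" unfolding Ck_def using k by simp
  have cardk: "card (ksub t k) = d choose k" if "t \<in> Xd" for t
    using card_ksub[of t k] unif[OF that] by simp
  define gt where "gt = (\<lambda>t. (\<Sum>x\<in>ksub t k. f x) / Ck)"
  define \<mu> where "\<mu> = (\<Sum>t\<in>Xd. p t * gt t)"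
  have mu: "expec Xd p d k f = \<mu>"
    unfolding expec_t \<mu>_def gt_def Ck_def by (simp add: sum_divide_distrib[symmetric])
  define DD where "DD = (\<lambda>t. \<Sum>s\<in>ksub t (k-1). \<Sum>w\<in>t-s. (f (insert w s) - mg f s)\<^sup>2)"
  have Dk_eq: "Dk k f = (\<Sum>t\<in>Xd. p t * DD t / Ck)"
    unfolding Dk_def DD_def Ck_def by (simp add: sum_divide_distrib[symmetric])
  have var_eq: "var Xd p d k f = (\<Sum>t\<in>Xd. p t * (\<Sum>x\<in>ksub t k. (f x - gt t)\<^sup>2) / Ck) + (\<Sum>t\<in>Xd. p t * (gt t - \<mu>)\<^sup>2)"
  proof -
    have "var Xd p d k f = (\<Sum>t\<in>Xd. p t * (\<Sum>x\<in>ksub t k. (f x - \<mu>)\<^sup>2)) / Ck"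
      unfolding var_def mu unfolding expec_t Ck_def ..
    also have "\<dots> = (\<Sum>t\<in>Xd. p t * (\<Sum>x\<in>ksub t k. (f x - gt t)\<^sup>2) / Ck + p t * (gt t - \<mu>)\<^sup>2)"
      unfolding sum_divide_distrib
    proof (intro sum.cong refl)
      fix t assume t: "t \<in> Xd"
      have ft: "finite (ksub t k)" using unif[OF t] by simp
      have "(\<Sum>x\<in>ksub t k. (f x - \<mu>)\<^sup>2) = (\<Sum>x\<in>ksub t k. (f x - gt t)\<^sup>2) + Ck * (gt t - \<mu>)\<^sup>2"
        using VD[OF ft, of f \<mu>] cardk[OF t] unfolding gt_def Ck_def by simp
      thus "p t * (\<Sum>x\<in>ksub t k. (f x - \<mu>)\<^sup>2) / Ck = p t * (\<Sum>x\<in>ksub t k. (f x - gt t)\<^sup>2) / Ck + p t * (gt t - \<mu>)\<^sup>2"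
        using Ck by (simp add: field_simps)
    qed
    finally show ?thesis by (simp add: sum.distrib)
  qed
  have J: "(\<Sum>t\<in>Xd. p t * (\<Sum>x\<in>ksub t k. (f x - gt t)\<^sup>2) / Ck) \<le> Dk k f"
    unfolding Dk_eq
  proof (intro sum_mono divide_right_mono mult_left_mono)
    fix t assume t: "t \<in> Xd"
    show "p t \<ge> 0" using p_nonneg[OF t] .
    show "Ck \<ge> 0" using Ck by simp
    have ft: "finite t" "card t = d" using unif[OF t] by auto
    have avg: "avgk t k f = gt t" unfolding avgk_def gt_def cardk[OF t] Ck_def ..
    have "(\<Sum>x\<in>ksub t k. (f x - gt t)\<^sup>2) \<le> ER t k f"
      using johnson[OF ft(1), of k f] k ft(2) avg by simp
    also have "ER t k f \<le> DD t" unfolding ER_def DD_def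
    proof (rule sum_mono)
      fix s assume s: "s \<in> ksub t (k-1)"
      have fts: "finite (t - s)" using ft by simp
      show "(\<Sum>w\<in>t-s. (f (insert w s) - mloc t s f)\<^sup>2) \<le> (\<Sum>w\<in>t-s. (f (insert w s) - mg f s)\<^sup>2)"
        using VD[OF fts, of "\<lambda>w. f (insert w s)" "mg f s"] unfolding mloc_def
        by (simp add: zero_le_mult_iff)
    qed
    finally show "(\<Sum>x\<in>ksub t k. (f x - gt t)\<^sup>2) \<le> DD t" .
  qed
  define c where "c = (\<lambda>u. ((\<Sum>x\<in>ksub u k. f x) + (\<Sum>s\<in>ksub u (k-1). mg f s)) / Ck)"
  have P1: "(\<Sum>t\<in>Xd. p t * (gt t - \<mu>)\<^sup>2) \<le> C * (\<Sum>t\<in>Xd. \<Sum>v\<in>t. p t * (gt t - c (t - {v}))\<^sup>2)"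
    unfolding \<mu>_def by (rule poincare[OF C_pos gap])
  have P2: "(\<Sum>t\<in>Xd. \<Sum>v\<in>t. p t * (gt t - c (t - {v}))\<^sup>2) \<le> Dk k f"
    unfolding Dk_eq
  proof (intro sum_mono)
    fix t assume t: "t \<in> Xd"
    have ft: "finite t" "card t = d" using unif[OF t] by auto
    have each: "(gt t - c (t - {v}))\<^sup>2 \<le> (\<Sum>s\<in>ksub (t - {v}) (k-1). (f (insert v s) - mg f s)\<^sup>2) / Ck"
      if v: "v \<in> t" for v
    proof -
      define S where "S = ksub (t - {v}) (k-1)"
      have fS: "finite S" unfolding S_def using ft by simp
      have cS: "real (card S) \<le> Ck"
      proof -
        have "card S = (d - 1) choose (k - 1)" unfolding S_def using card_ksub[of "t - {v}" "k-1"] ft v by simp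
        thus ?thesis unfolding Ck_def using binom_le[OF k] by simp
      qed
      have diff: "gt t - c (t - {v}) = (\<Sum>s\<in>S. f (insert v s) - mg f s) / Ck"
        unfolding gt_def c_def S_def split_vertex[OF ft(1) v k(1)]
        by (simp add: sum_subtractf diff_divide_distrib add_divide_distrib)
      have "(gt t - c (t - {v}))\<^sup>2 = (\<Sum>s\<in>S. f (insert v s) - mg f s)\<^sup>2 / Ck\<^sup>2"
        unfolding diff by (simp add: power_divide)
      also have "\<dots> \<le> (card S * (\<Sum>s\<in>S. (f (insert v s) - mg f s)\<^sup>2)) / Ck\<^sup>2"
        by (intro divide_right_mono sum_sq_le_card[OF fS]) simp
      also have "\<dots> \<le> (Ck * (\<Sum>s\<in>S. (f (insert v s) - mg f s)\<^sup>2)) / Ck\<^sup>2"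
        by (intro divide_right_mono mult_right_mono cS sum_nonneg) auto
      also have "\<dots> = (\<Sum>s\<in>S. (f (insert v s) - mg f s)\<^sup>2) / Ck"
        using Ck by (simp add: power2_eq_square)
      finally show ?thesis unfolding S_def .
    qed
    have "(\<Sum>v\<in>t. p t * (gt t - c (t - {v}))\<^sup>2) \<le> (\<Sum>v\<in>t. p t * ((\<Sum>s\<in>ksub (t - {v}) (k-1). (f (insert v s) - mg f s)\<^sup>2) / Ck))"
      by (intro sum_mono mult_left_mono each p_nonneg[OF t])
    also have "\<dots> = p t * (\<Sum>v\<in>t. \<Sum>s\<in>ksub (t - {v}) (k-1). (f (insert v s) - mg f s)\<^sup>2) / Ck"
      by (simp add: sum_distrib_left sum_divide_distrib)
    also have "(\<Sum>v\<in>t. \<Sum>s\<in>ksub (t - {v}) (k-1). (f (insert v s) - mg f s)\<^sup>2) = DD t"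
      unfolding DD_def by (rule SW[OF ft(1)])
    finally show "(\<Sum>v\<in>t. p t * (gt t - c (t - {v}))\<^sup>2) \<le> p t * DD t / Ck" .
  qed
  have "(\<Sum>t\<in>Xd. p t * (gt t - \<mu>)\<^sup>2) \<le> C * Dk k f"
    using P1 P2 C_pos by (meson mult_left_mono less_imp_le order_trans)
  thus ?thesis unfolding var_eq using J by (simp add: algebra_simps)
qed

end

theorem mainTheorem12:
  fixes Xd :: "'v set set" and p :: "'v set \<Rightarrow> real" and d :: nat and C :: real
  assumes fin: "finite Xd" and ne: "Xd \<noteq> {}"
    and unif: "\<forall>s\<in>Xd. finite s \<and> card s = d" and d_pos: "d \<ge> 1"
    and p_pos: "\<forall>s\<in>Xd. p s > 0" and p_sum: "(\<Sum>s\<in>Xd. p s) = 1"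
    and C_pos: "C > 0"
    and gap: "lambda2_le (down_up_mat Xd p d) (1 - 1 / (C * real d))"
  shows "\<forall>k \<le> d. \<forall>f :: 'v set \<Rightarrow> real.
     var Xd p d k f \<le> (C + 1) *
       expec Xd p d k (\<lambda>x. \<Sum>v\<in>x. \<Sum>z\<in>\<Union>Xd.
          link_vertex_dist Xd p d (x - {v}) z *
          (max (f x - f (insert z (x - {v}))) 0)\<^sup>2)"
proof -
  interpret CX: cplx Xd p d
    by unfold_locales (use fin unif d_pos p_pos p_sum in auto)
  show ?thesis
  proof (intro allI impI)
    fix k and f :: "'v set \<Rightarrow> real"
    assume k: "k \<le> d"
    show "var Xd p d k f \<le> (C + 1) *
       expec Xd p d k (\<lambda>x. \<Sum>v\<in>x. \<Sum>z\<in>\<Union>Xd.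
          link_vertex_dist Xd p d (x - {v}) z *
          (max (f x - f (insert z (x - {v}))) 0)\<^sup>2)"
    proof (cases "k = 0")
      case True
      have e: "expec Xd p d 0 h = h {}" for h
      proof -
        have "expec Xd p d 0 h = (\<Sum>t\<in>Xd. p t * h {})"
          unfolding CX.expec_t using unif by (simp add: ksub0)
        also have "\<dots> = h {}" using p_sum by (simp add: sum_distrib_right[symmetric])
        finally show ?thesis .
      qed
      show ?thesis unfolding True var_def e by simp
    next
      case False
      hence k1: "1 \<le> k" by simp
      show ?thesis unfolding CX.rhs_eq[OF k1 k] by (rule CX.var_bound[OF k1 k C_pos gap])
    qed
  qed
qed

end
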